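(* There is an algorithm which, given as input an interpreted automatic structure $(\Gamma,\iota)$ describing a semigroup $S$, decides whether $S$ is a monoid, and if so finds a word in the language of representatives $L$ representing the identity of $S$.
   Context: Let $A$ be a finite alphabet, $\$ \notin A$, and let $\delta$ send a pair of words over $A$ to the word over $(A\cup\{\$\})\times(A\cup\{\$\})$ obtained by padding the shorter word on the right with $\$$ and reading both letter by letter. A synchronous automaton recognises a relation $R$ if it accepts exactly $\delta(R)$. A pre-automatic structure $\Gamma$ consists of a finite alphabet $A$, a finite automaton recognising $L\subseteq A^*$, a synchronous automaton recognising $L_=\subseteq L\times L$, and for each $a\in A$ a synchronous automaton recognising $L_a\subseteq L\times L$. An interpretation with respect to a semigroup $S$ is a morphism $\sigma:A^*\to S$ with $\sigma(L)=S$ such that for $u,v\in L$: $(u,v)\in L_=$ iff $\sigma(u)=\sigma(v)$, and $(u,v)\in L_a$ iff $\sigma(ua)=\sigma(v)$. An assignment of generators is a function $\iota:A\to L$ for which there exists an interpretation $\sigma$ with $\sigma(a)=\sigma(\iota(a))$ for all $a\in A$ (such $\sigma$ is consistent with $\iota$). An interpreted automatic structure describing $S$ is a pair $(\Gamma,\iota)$ where the interpretation consistent with $\iota$ maps into $S$; it is given as the automata of $\Gamma$ together with the words $\iota(a)$. A word $w$ represents $\sigma(w)$. *)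

theory Defs
  imports Main "HOL-Library.Nat_Bijection" "HOL-Algebra.Group"
begin

section \<open>A model of computation: Kleene partial recursive functions on nat\<close>

datatype recf = Zf | Sf | Proj nat | Comp recf "recf list" | Prim recf recf | Mu recf

inductive eval :: "recf \<Rightarrow> nat list \<Rightarrow> nat \<Rightarrow> bool" where
  ev_Z: "eval Zf xs 0"
| ev_S: "eval Sf (x # xs) (Suc x)"
| ev_Proj: "i < length xs \<Longrightarrow> eval (Proj i) xs (xs ! i)"
| ev_Comp: "length ys = length gs \<Longrightarrow> (\<forall>i < length gs. eval (gs ! i) xs (ys ! i))
            \<Longrightarrow> eval f ys z \<Longrightarrow> eval (Comp f gs) xs z"
| ev_Prim0: "eval f xs y \<Longrightarrow> eval (Prim f g) (0 # xs) y"
| ev_PrimS: "eval (Prim f g) (n # xs) y \<Longrightarrow> eval g (y # n # xs) z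
            \<Longrightarrow> eval (Prim f g) (Suc n # xs) z"
| ev_Mu: "eval f (n # xs) 0 \<Longrightarrow> (\<forall>m < n. \<exists>y. eval f (m # xs) (Suc y))
            \<Longrightarrow> eval (Mu f) xs n"

text \<open>A (nondeterministic) finite automaton with states in nat and letters of type 'l:
  (initial states, final states, transitions (p, letter, q)).\<close>
type_synonym 'l nfa = "nat list \<times> nat list \<times> (nat \<times> 'l \<times> nat) list"

fun reach :: "(nat \<times> 'l \<times> nat) list \<Rightarrow> nat set \<Rightarrow> 'l list \<Rightarrow> nat set" where
  "reach T Q [] = Q"
| "reach T Q (a # w) = reach T {q'. \<exists>q \<in> Q. (q, a, q') \<in> set T} w"

definition accepts :: "'l nfa \<Rightarrow> 'l list \<Rightarrow> bool" where
  "accepts M w = (case M of (I, F, T) \<Rightarrow> reach T (set I) w \<inter> set F \<noteq> {})"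

definition lang :: "'l nfa \<Rightarrow> 'l list set" where
  "lang M = {w. accepts M w}"

text \<open>Letters of the alphabet A are 0,...,k-1; the padding symbol \$ is None.\<close>
type_synonym pletter = "nat option \<times> nat option"

definition conv :: "nat list \<Rightarrow> nat list \<Rightarrow> pletter list" where
  "conv u v = map (\<lambda>i. (if i < length u then Some (u ! i) else None,
                        if i < length v then Some (v ! i) else None))
                  [0..<max (length u) (length v)]"

definition sync_recognises :: "pletter nfa \<Rightarrow> (nat list \<times> nat list) set \<Rightarrow> bool" where
  "sync_recognises M R \<longleftrightarrow> lang M = (\<lambda>(u, v). conv u v) ` R"

definition sync_rel :: "pletter nfa \<Rightarrow> (nat list \<times> nat list) set" where
  "sync_rel M = {(u, v). accepts M (conv u v)}"

text \<open>(k, M_L, M_eq, [M_0, ..., M_(k-1)]): alphabet A = {0..<k}.\<close>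
type_synonym preaut = "nat \<times> nat nfa \<times> pletter nfa \<times> pletter nfa list"

definition alph :: "preaut \<Rightarrow> nat set" where
  "alph \<Gamma> = {..< fst \<Gamma>}"

definition L_of :: "preaut \<Rightarrow> nat list set" where
  "L_of \<Gamma> = (case \<Gamma> of (k, ML, Meq, Ma) \<Rightarrow> lang ML)"

definition Leq_of :: "preaut \<Rightarrow> (nat list \<times> nat list) set" where
  "Leq_of \<Gamma> = (case \<Gamma> of (k, ML, Meq, Ma) \<Rightarrow> sync_rel Meq)"

definition La_of :: "preaut \<Rightarrow> nat \<Rightarrow> (nat list \<times> nat list) set" where
  "La_of \<Gamma> a = (case \<Gamma> of (k, ML, Meq, Ma) \<Rightarrow> sync_rel (Ma ! a))"

definition pre_automatic :: "preaut \<Rightarrow> bool" where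
  "pre_automatic \<Gamma> \<longleftrightarrow> (case \<Gamma> of (k, ML, Meq, Ma) \<Rightarrow>
      lang ML \<subseteq> lists {..<k}
    \<and> (\<exists>R. R \<subseteq> lang ML \<times> lang ML \<and> sync_recognises Meq R)
    \<and> length Ma = k
    \<and> (\<forall>a < k. \<exists>R. R \<subseteq> lang ML \<times> lang ML \<and> sync_recognises (Ma ! a) R))"

definition semigroup_on :: "'a set \<Rightarrow> ('a \<Rightarrow> 'a \<Rightarrow> 'a) \<Rightarrow> bool" where
  "semigroup_on S f \<longleftrightarrow> (\<forall>x\<in>S. \<forall>y\<in>S. f x y \<in> S)
     \<and> (\<forall>x\<in>S. \<forall>y\<in>S. \<forall>z\<in>S. f (f x y) z = f x (f y z))"

text \<open>The semigroup morphism A^+ \<rightarrow> S determined by the images g of the letters.\<close>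
fun word_val :: "('a \<Rightarrow> 'a \<Rightarrow> 'a) \<Rightarrow> (nat \<Rightarrow> 'a) \<Rightarrow> nat list \<Rightarrow> 'a" where
  "word_val f g [] = undefined"
| "word_val f g (a # w) = foldl (\<lambda>x b. f x (g b)) (g a) w"

definition is_interpretation :: "preaut \<Rightarrow> 'a set \<Rightarrow> ('a \<Rightarrow> 'a \<Rightarrow> 'a) \<Rightarrow> (nat \<Rightarrow> 'a) \<Rightarrow> bool" where
  "is_interpretation \<Gamma> S f g \<longleftrightarrow>
      g ` alph \<Gamma> \<subseteq> S
    \<and> [] \<notin> L_of \<Gamma>
    \<and> word_val f g ` L_of \<Gamma> = S
    \<and> (\<forall>u \<in> L_of \<Gamma>. \<forall>v \<in> L_of \<Gamma>. (u, v) \<in> Leq_of \<Gamma> \<longleftrightarrow> word_val f g u = word_val f g v)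
    \<and> (\<forall>a \<in> alph \<Gamma>. \<forall>u \<in> L_of \<Gamma>. \<forall>v \<in> L_of \<Gamma>.
          (u, v) \<in> La_of \<Gamma> a \<longleftrightarrow> word_val f g (u @ [a]) = word_val f g v)"

definition consistent :: "preaut \<Rightarrow> nat list list \<Rightarrow> ('a \<Rightarrow> 'a \<Rightarrow> 'a) \<Rightarrow> (nat \<Rightarrow> 'a) \<Rightarrow> bool" where
  "consistent \<Gamma> \<iota> f g \<longleftrightarrow> (\<forall>a \<in> alph \<Gamma>. g a = word_val f g (\<iota> ! a))"

definition assignment :: "preaut \<Rightarrow> nat list list \<Rightarrow> bool" where
  "assignment \<Gamma> \<iota> \<longleftrightarrow> length \<iota> = fst \<Gamma> \<and> set \<iota> \<subseteq> L_of \<Gamma>"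

text \<open>The existence of an interpretation consistent with \<iota> (required for \<iota> to be an
  assignment of generators) is witnessed in describes by the interpretation g itself.
  (\<Gamma>, \<iota>) is an interpreted automatic structure describing (S, f), where g gives the
  interpretation consistent with \<iota> (which maps onto S).\<close>
definition describes :: "preaut \<Rightarrow> nat list list \<Rightarrow> 'a set \<Rightarrow> ('a \<Rightarrow> 'a \<Rightarrow> 'a) \<Rightarrow> (nat \<Rightarrow> 'a) \<Rightarrow> bool" where
  "describes \<Gamma> \<iota> S f g \<longleftrightarrow> pre_automatic \<Gamma> \<and> assignment \<Gamma> \<iota>
     \<and> is_interpretation \<Gamma> S f g \<and> consistent \<Gamma> \<iota> f g"

definition enc_opt :: "nat option \<Rightarrow> nat" where
  "enc_opt x = (case x of None \<Rightarrow> 0 | Some n \<Rightarrow> Suc n)"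

definition enc_pletter :: "pletter \<Rightarrow> nat" where
  "enc_pletter p = prod_encode (enc_opt (fst p), enc_opt (snd p))"

definition enc_nfa :: "('l \<Rightarrow> nat) \<Rightarrow> 'l nfa \<Rightarrow> nat" where
  "enc_nfa e M = (case M of (I, F, T) \<Rightarrow>
     prod_encode (list_encode I, prod_encode (list_encode F,
       list_encode (map (\<lambda>(p, a, q). prod_encode (p, prod_encode (e a, q))) T))))"

definition enc_input :: "preaut \<Rightarrow> nat list list \<Rightarrow> nat" where
  "enc_input \<Gamma> \<iota> = (case \<Gamma> of (k, ML, Meq, Ma) \<Rightarrow>
     prod_encode (k, prod_encode (enc_nfa id ML, prod_encode (enc_nfa enc_pletter Meq,
       prod_encode (list_encode (map (enc_nfa enc_pletter) Ma), list_encode (map list_encode \<iota>))))))"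

text \<open>Output convention: 0 means "S is not a monoid"; Suc (list_encode w) means
  "S is a monoid and w represents its identity".\<close>

end

theory Submission
  imports Defs
begin

definition cmp :: "nat \<Rightarrow> (nat list \<Rightarrow> nat) \<Rightarrow> bool" where
  "cmp n F \<longleftrightarrow> (\<exists>P. \<forall>xs. length xs = n \<longrightarrow> eval P xs (F xs))"

lemma cmp_cong: "cmp n F \<Longrightarrow> (\<And>xs. length xs = n \<Longrightarrow> F xs = G xs) \<Longrightarrow> cmp n G"
  unfolding cmp_def by metis

lemma cmp_cong': "cmp m F \<Longrightarrow> (\<And>xs. length xs = n \<Longrightarrow> F xs = G xs) \<Longrightarrow> m = n \<Longrightarrow> cmp n G"
  unfolding cmp_def by metis

lemma len1: "length xs = 1 \<Longrightarrow> \<exists>a. xs = [a]"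
  by (cases xs) auto
lemma len2: "length xs = 2 \<Longrightarrow> \<exists>a b. xs = [a, b]"
  by (cases xs; cases "tl xs") auto
lemma len3: "length xs = 3 \<Longrightarrow> \<exists>a b c. xs = [a, b, c]"
  by (cases xs; cases "tl xs"; cases "tl (tl xs)") (auto simp: numeral_3_eq_3)

lemma cmp_zero: "cmp n (\<lambda>_. 0)"
  unfolding cmp_def by (auto intro: ev_Z)

lemma cmp_proj: "i < n \<Longrightarrow> cmp n (\<lambda>xs. xs ! i)"
  unfolding cmp_def by (auto intro!: exI[of _ "Proj i"] ev_Proj)

lemma cmp_suc: "cmp n F \<Longrightarrow> cmp n (\<lambda>xs. Suc (F xs))"
  unfolding cmp_def
proof (elim exE)
  fix P assume P: "\<forall>xs. length xs = n \<longrightarrow> eval P xs (F xs)"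
  show "\<exists>P. \<forall>xs. length xs = n \<longrightarrow> eval P xs (Suc (F xs))"
  proof (intro exI[of _ "Comp Sf [P]"] allI impI)
    fix xs :: "nat list" assume "length xs = n"
    then show "eval (Comp Sf [P]) xs (Suc (F xs))"
      using P by (intro ev_Comp[where ys="[F xs]"]) (auto intro: ev_S)
  qed
qed

lemma cmp_comp:
  assumes F: "cmp m F" and G: "\<And>i. i < m \<Longrightarrow> cmp n (G i)"
  shows "cmp n (\<lambda>xs. F (map (\<lambda>i. G i xs) [0..<m]))"
proof -
  obtain PF where PF: "\<forall>ys. length ys = m \<longrightarrow> eval PF ys (F ys)" using F unfolding cmp_def by blast
  have "\<forall>i. \<exists>P. i < m \<longrightarrow> (\<forall>xs. length xs = n \<longrightarrow> eval P xs (G i xs))"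
    using G unfolding cmp_def by blast
  then obtain PG where PG: "\<And>i xs. i < m \<Longrightarrow> length xs = n \<Longrightarrow> eval (PG i) xs (G i xs)"
    by metis
  show ?thesis unfolding cmp_def
  proof (intro exI[of _ "Comp PF (map PG [0..<m])"] allI impI)
    fix xs :: "nat list" assume xs: "length xs = n"
    show "eval (Comp PF (map PG [0..<m])) xs (F (map (\<lambda>i. G i xs) [0..<m]))"
      by (rule ev_Comp[where ys="map (\<lambda>i. G i xs) [0..<m]"]) (use PF PG xs in auto)
  qed
qed

lemma cmp_prim:
  assumes F: "cmp n F" and G: "cmp (Suc (Suc n)) G"
  shows "cmp (Suc n) (\<lambda>xs. rec_nat (F (tl xs)) (\<lambda>k r. G (r # k # tl xs)) (hd xs))"
proof -
  obtain PF where PF: "\<forall>ys. length ys = n \<longrightarrow> eval PF ys (F ys)" using F unfolding cmp_def by blast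
  obtain PG where PG: "\<forall>ys. length ys = Suc (Suc n) \<longrightarrow> eval PG ys (G ys)" using G unfolding cmp_def by blast
  have main: "eval (Prim PF PG) (y # ys) (rec_nat (F ys) (\<lambda>k r. G (r # k # ys)) y)" if "length ys = n" for y ys
  proof (induction y)
    case 0 then show ?case using PF that by (auto intro: ev_Prim0)
  next
    case (Suc y) then show ?case using PG that by (auto intro: ev_PrimS)
  qed
  show ?thesis unfolding cmp_def
  proof (intro exI[of _ "Prim PF PG"] allI impI)
    fix xs :: "nat list" assume "length xs = Suc n"
    then obtain y ys where "xs = y # ys" "length ys = n" by (cases xs) auto
    then show "eval (Prim PF PG) xs (rec_nat (F (tl xs)) (\<lambda>k r. G (r # k # tl xs)) (hd xs))"
      using main by simp
  qed
qed

lemma cmp_comp2: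
  assumes "cmp 2 (\<lambda>xs. h (xs!0) (xs!1))" "cmp n A" "cmp n B"
  shows "cmp n (\<lambda>xs. h (A xs) (B xs))"
proof -
  have "cmp n (\<lambda>xs. (\<lambda>ys. h (ys!0) (ys!1)) (map (\<lambda>i. ([A, B] ! i) xs) [0..<2]))"
    by (rule cmp_comp) (use assms in \<open>auto simp: less_2_cases_iff\<close>)
  then show ?thesis by (simp add: upt_rec)
qed

lemma cmp_comp3:
  assumes "cmp 3 (\<lambda>xs. h (xs!0) (xs!1) (xs!2))" "cmp n A" "cmp n B" "cmp n C"
  shows "cmp n (\<lambda>xs. h (A xs) (B xs) (C xs))"
proof -
  have "cmp n (\<lambda>xs. (\<lambda>ys. h (ys!0) (ys!1) (ys!2)) (map (\<lambda>i. ([A, B, C] ! i) xs) [0..<3]))"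
    by (rule cmp_comp) (use assms in \<open>auto simp: numeral_3_eq_3 less_Suc_eq\<close>)
  then show ?thesis by (simp add: upt_rec)
qed

lemma cmp_comp1:
  assumes "cmp 1 (\<lambda>xs. h (xs!0))" "cmp n A"
  shows "cmp n (\<lambda>xs. h (A xs))"
proof -
  have "cmp n (\<lambda>xs. (\<lambda>ys. h (ys!0)) (map (\<lambda>i. ([A] ! i) xs) [0..<1]))"
    by (rule cmp_comp) (use assms in \<open>auto\<close>)
  then show ?thesis by (simp add: upt_rec)
qed

lemma cmp_const: "cmp n (\<lambda>_. c)"
  by (induction c) (auto intro: cmp_zero cmp_suc)

lemma cmp_add: "cmp 2 (\<lambda>xs. xs!0 + xs!1)"
proof -
  have "cmp (Suc 1) (\<lambda>xs. rec_nat ((\<lambda>ys. ys!0) (tl xs)) (\<lambda>k r. (\<lambda>zs. Suc (zs!0)) (r # k # tl xs)) (hd xs))"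
    by (rule cmp_prim) (auto intro: cmp_suc cmp_proj)
  then show ?thesis
  proof (rule cmp_cong')
    fix xs :: "nat list" assume "length xs = 2"
    then obtain a b where "xs = [a, b]" using len2 by blast
    then show "rec_nat (tl xs ! 0) (\<lambda>k r. Suc ((r # k # tl xs) ! 0)) (hd xs) = xs ! 0 + xs ! 1"
      by (induction a arbitrary: xs) auto
  qed simp
qed

lemma cmp_pred: "cmp 1 (\<lambda>xs. xs!0 - 1)"
proof -
  have "cmp (Suc 0) (\<lambda>xs. rec_nat ((\<lambda>ys. 0) (tl xs)) (\<lambda>k r. (\<lambda>zs. zs!1) (r # k # tl xs)) (hd xs))"
    by (rule cmp_prim) (auto intro: cmp_zero cmp_proj)
  then show ?thesis
  proof (rule cmp_cong')
    fix xs :: "nat list" assume "length xs = 1"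
    then obtain a where "xs = [a]" using len1 by blast
    then show "rec_nat 0 (\<lambda>k r. (r # k # tl xs) ! 1) (hd xs) = xs ! 0 - 1"
      by (cases a) auto
  qed simp
qed

lemma cmp_rminus: "cmp 2 (\<lambda>xs. xs!1 - xs!0)"
proof -
  have "cmp (Suc 1) (\<lambda>xs. rec_nat ((\<lambda>ys. ys!0) (tl xs)) (\<lambda>k r. (\<lambda>zs. zs!0 - 1) (r # k # tl xs)) (hd xs))"
    by (rule cmp_prim) (rule cmp_proj, simp, rule cmp_comp1[OF cmp_pred], rule cmp_proj, simp)
  then show ?thesis
  proof (rule cmp_cong')
    fix xs :: "nat list" assume "length xs = 2"
    then obtain a b where "xs = [a, b]" using len2 by blast
    then show "rec_nat (tl xs ! 0) (\<lambda>k r. (r # k # tl xs) ! 0 - 1) (hd xs) = xs ! 1 - xs ! 0"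
      by (induction a arbitrary: xs) auto
  qed simp
qed

lemma cmp_minus: "cmp 2 (\<lambda>xs. xs!0 - xs!1)"
proof -
  have "cmp 2 (\<lambda>xs. (\<lambda>a b. b - a) (xs!1) (xs!0))"
    by (rule cmp_comp2[OF cmp_rminus]) (auto intro: cmp_proj)
  then show ?thesis by simp
qed

lemma cmp_cond: "cmp 3 (\<lambda>xs. if xs!0 = 0 then xs!1 else xs!2)"
proof -
  have "cmp (Suc 2) (\<lambda>xs. rec_nat ((\<lambda>ys. ys!0) (tl xs)) (\<lambda>k r. (\<lambda>zs. zs!3) (r # k # tl xs)) (hd xs))"
    by (rule cmp_prim) (auto intro: cmp_proj)
  then show ?thesis
  proof (rule cmp_cong')
    fix xs :: "nat list" assume "length xs = 3"
    then obtain a b c where "xs = [a, b, c]" using len3 by blast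
    then show "rec_nat (tl xs ! 0) (\<lambda>k r. (r # k # tl xs) ! 3) (hd xs) = (if xs!0 = 0 then xs!1 else xs!2)"
      by (cases a) (auto simp: numeral_3_eq_3)
  qed simp
qed

lemma cmp_triangle: "cmp 1 (\<lambda>xs. triangle (xs!0))"
proof -
  have "cmp (Suc 0) (\<lambda>xs. rec_nat ((\<lambda>ys. 0) (tl xs)) (\<lambda>k r. (\<lambda>zs. zs!0 + Suc (zs!1)) (r # k # tl xs)) (hd xs))"
    by (rule cmp_prim) (auto intro!: cmp_zero cmp_comp2[OF cmp_add] cmp_suc cmp_proj)
  then show ?thesis
  proof (rule cmp_cong')
    fix xs :: "nat list" assume "length xs = 1"
    then obtain a where "xs = [a]" using len1 by blast
    then show "rec_nat 0 (\<lambda>k r. (r # k # tl xs) ! 0 + Suc ((r # k # tl xs) ! 1)) (hd xs) = triangle (xs ! 0)"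
      by (induction a arbitrary: xs) auto
  qed simp
qed

lemma cmp_pe: "cmp 2 (\<lambda>xs. prod_encode (xs!0, xs!1))"
proof -
  have "cmp 2 (\<lambda>xs. triangle (xs!0 + xs!1) + xs!0)"
    by (intro cmp_comp2[OF cmp_add] cmp_comp1[OF cmp_triangle] cmp_proj) auto
  then show ?thesis by (simp add: prod_encode_def)
qed

lemma cmp_le: "cmp 2 (\<lambda>xs. if xs!0 \<le> xs!1 then 1 else 0)"
proof -
  have "cmp 2 (\<lambda>xs. 1 - (xs!0 - xs!1))"
    by (intro cmp_comp2[OF cmp_minus] cmp_const cmp_proj) auto
  then show ?thesis by (rule cmp_cong) auto
qed

definition diag :: "nat \<Rightarrow> nat" where
  "diag n = rec_nat 0 (\<lambda>k r. if triangle (Suc r) \<le> Suc k then Suc r else r) n"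

lemma diag_spec: "triangle (diag n) \<le> n \<and> n < triangle (Suc (diag n))"
proof (induction n)
  case 0 then show ?case by (simp add: diag_def)
next
  case (Suc n)
  have eq: "diag (Suc n) = (if triangle (Suc (diag n)) \<le> Suc n then Suc (diag n) else diag n)"
    by (simp add: diag_def)
  show ?case
  proof (cases "triangle (Suc (diag n)) \<le> Suc n")
    case True
    then have "triangle (Suc (diag n)) = Suc n" using Suc by simp
    then show ?thesis using True eq by simp
  next
    case False then show ?thesis using Suc eq by simp
  qed
qed

lemma cmp_diag: "cmp 1 (\<lambda>xs. diag (xs!0))"
proof -
  have "cmp (Suc 0) (\<lambda>xs. rec_nat ((\<lambda>ys. 0) (tl xs)) (\<lambda>k r. (\<lambda>zs. if (if triangle (Suc (zs!0)) \<le> Suc (zs!1) then 1 else (0::nat)) = 0 then zs!0 else Suc (zs!0)) (r # k # tl xs)) (hd xs))"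
    apply (rule cmp_prim, rule cmp_zero)
    apply (rule cmp_comp3[OF cmp_cond] cmp_comp2[OF cmp_le] cmp_comp1[OF cmp_triangle] cmp_suc cmp_proj | (simp; fail))+
    done
  then show ?thesis
  proof (rule cmp_cong')
    fix xs :: "nat list" assume "length xs = 1"
    then obtain a where "xs = [a]" using len1 by blast
    then show "rec_nat 0 (\<lambda>k r. (\<lambda>zs. if (if triangle (Suc (zs!0)) \<le> Suc (zs!1) then 1 else (0::nat)) = 0 then zs!0 else Suc (zs!0)) (r # k # tl xs)) (hd xs) = diag (xs ! 0)"
      by (simp add: diag_def, intro arg_cong[of _ _ "\<lambda>s. rec_nat 0 s a"] ext, simp)
  qed simp
qed

definition pfst :: "nat \<Rightarrow> nat" where "pfst n = fst (prod_decode n)"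
definition psnd :: "nat \<Rightarrow> nat" where "psnd n = snd (prod_decode n)"

lemma pfst_pe[simp]: "pfst (prod_encode (a, b)) = a" by (simp add: pfst_def)
lemma psnd_pe[simp]: "psnd (prod_encode (a, b)) = b" by (simp add: psnd_def)

lemma prod_decode_diag: "prod_decode n = (n - triangle (diag n), diag n - (n - triangle (diag n)))"
proof -
  let ?s = "diag n"
  have s: "triangle ?s \<le> n" "n < triangle ?s + Suc ?s" using diag_spec[of n] by auto
  have "prod_encode (n - triangle ?s, ?s - (n - triangle ?s)) = n"
    using s by (simp add: prod_encode_def)
  then show ?thesis by (metis prod_encode_inverse)
qed

lemma cmp_pfst: "cmp 1 (\<lambda>xs. pfst (xs!0))"
proof -
  have "cmp 1 (\<lambda>xs. xs!0 - triangle (diag (xs!0)))"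
    by (intro cmp_comp2[OF cmp_minus] cmp_comp1[OF cmp_triangle] cmp_comp1[OF cmp_diag] cmp_proj) auto
  then show ?thesis by (simp add: pfst_def prod_decode_diag)
qed

lemma cmp_psnd: "cmp 1 (\<lambda>xs. psnd (xs!0))"
proof -
  have "cmp 1 (\<lambda>xs. diag (xs!0) - (xs!0 - triangle (diag (xs!0))))"
    by (intro cmp_comp2[OF cmp_minus] cmp_comp1[OF cmp_triangle] cmp_comp1[OF cmp_diag] cmp_proj) auto
  then show ?thesis by (simp add: psnd_def prod_decode_diag)
qed


definition rf1 :: "(nat \<Rightarrow> nat) \<Rightarrow> bool" where
  "rf1 F \<longleftrightarrow> cmp 1 (\<lambda>xs. F (xs!0))"

definition rp1 :: "(nat \<Rightarrow> bool) \<Rightarrow> bool" where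
  "rp1 P \<longleftrightarrow> rf1 (\<lambda>x. if P x then 1 else 0)"

lemma rf1_cmp: "rf1 F \<Longrightarrow> cmp n A \<Longrightarrow> cmp n (\<lambda>xs. F (A xs))"
  unfolding rf1_def by (rule cmp_comp1[of F])

lemma cmp_rf1: "cmp 1 (\<lambda>xs. h (xs!0)) \<Longrightarrow> rf1 A \<Longrightarrow> rf1 (\<lambda>x. h (A x))"
  unfolding rf1_def by (rule cmp_comp1[of h]) (auto intro: cmp_proj)

lemma cmp2_rf1: "cmp 2 (\<lambda>xs. h (xs!0) (xs!1)) \<Longrightarrow> rf1 A \<Longrightarrow> rf1 B \<Longrightarrow> rf1 (\<lambda>x. h (A x) (B x))"
  unfolding rf1_def by (rule cmp_comp2[of h])

lemma cmp3_rf1: "cmp 3 (\<lambda>xs. h (xs!0) (xs!1) (xs!2)) \<Longrightarrow> rf1 A \<Longrightarrow> rf1 B \<Longrightarrow> rf1 C \<Longrightarrow> rf1 (\<lambda>x. h (A x) (B x) (C x))"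
  unfolding rf1_def by (rule cmp_comp3[of h])

lemma rf1_comp: "rf1 F \<Longrightarrow> rf1 G \<Longrightarrow> rf1 (\<lambda>x. F (G x))"
  unfolding rf1_def by (rule cmp_comp1[of F])

lemma rf1_id: "rf1 (\<lambda>x. x)"
  unfolding rf1_def by (rule cmp_proj) simp

lemma rf1_const: "rf1 (\<lambda>x. c)"
  unfolding rf1_def by (rule cmp_const)

lemma rf1_Suc: "rf1 A \<Longrightarrow> rf1 (\<lambda>x. Suc (A x))"
  unfolding rf1_def by (rule cmp_suc)

lemma rf1_pfst: "rf1 A \<Longrightarrow> rf1 (\<lambda>x. pfst (A x))"
  by (rule cmp_rf1[OF cmp_pfst])

lemma rf1_psnd: "rf1 A \<Longrightarrow> rf1 (\<lambda>x. psnd (A x))"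
  by (rule cmp_rf1[OF cmp_psnd])

lemma rf1_add: "rf1 A \<Longrightarrow> rf1 B \<Longrightarrow> rf1 (\<lambda>x. A x + B x)"
  by (rule cmp2_rf1[OF cmp_add])

lemma rf1_minus: "rf1 A \<Longrightarrow> rf1 B \<Longrightarrow> rf1 (\<lambda>x. A x - B x)"
  by (rule cmp2_rf1[OF cmp_minus])

lemma rf1_pe: "rf1 A \<Longrightarrow> rf1 B \<Longrightarrow> rf1 (\<lambda>x. prod_encode (A x, B x))"
  by (rule cmp2_rf1[OF cmp_pe])

lemma rf1_ifz: "rf1 C \<Longrightarrow> rf1 A \<Longrightarrow> rf1 B \<Longrightarrow> rf1 (\<lambda>x. if C x = 0 then A x else B x)"
  by (rule cmp3_rf1[OF cmp_cond])

lemma rf1_cong: "rf1 F \<Longrightarrow> (\<And>x. F x = G x) \<Longrightarrow> rf1 G"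
proof -
  assume "rf1 F" "\<And>x. F x = G x"
  then have "F = G" by auto
  then show "rf1 G" using \<open>rf1 F\<close> by simp
qed

lemma rf1_if: "rp1 P \<Longrightarrow> rf1 A \<Longrightarrow> rf1 B \<Longrightarrow> rf1 (\<lambda>x. if P x then A x else B x)"
proof -
  assume p: "rp1 P" and a: "rf1 A" and b: "rf1 B"
  have "rf1 (\<lambda>x. if (if P x then 1 else 0::nat) = 0 then B x else A x)"
    by (rule rf1_ifz[OF p[unfolded rp1_def] b a])
  then show ?thesis by (rule rf1_cong) simp
qed

lemma rp1_cong: "rp1 P \<Longrightarrow> (\<And>x. P x = Q x) \<Longrightarrow> rp1 Q"
  unfolding rp1_def by (erule rf1_cong) simp

lemma rp1_le: "rf1 A \<Longrightarrow> rf1 B \<Longrightarrow> rp1 (\<lambda>x. A x \<le> B x)"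
  unfolding rp1_def by (rule cmp2_rf1[OF cmp_le])

lemma rp1_less: "rf1 A \<Longrightarrow> rf1 B \<Longrightarrow> rp1 (\<lambda>x. A x < B x)"
proof -
  assume "rf1 A" "rf1 B"
  then have "rp1 (\<lambda>x. Suc (A x) \<le> B x)" by (intro rp1_le rf1_Suc)
  then show ?thesis by (rule rp1_cong) auto
qed

lemma rp1_eq: "rf1 A \<Longrightarrow> rf1 B \<Longrightarrow> rp1 (\<lambda>x. A x = B x)"
proof -
  assume "rf1 A" "rf1 B"
  then have "rf1 (\<lambda>x. 1 - ((A x - B x) + (B x - A x)))" by (intro rf1_minus rf1_add rf1_const)
  then show ?thesis unfolding rp1_def by (rule rf1_cong) auto
qed

lemma rp1_const: "rp1 (\<lambda>x. b)"
  unfolding rp1_def by (rule rf1_const)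

lemma rp1_not: "rp1 P \<Longrightarrow> rp1 (\<lambda>x. \<not> P x)"
proof -
  assume p: "rp1 P"
  have "rf1 (\<lambda>x. 1 - (if P x then 1 else 0))"
    by (rule rf1_minus[OF rf1_const p[unfolded rp1_def]])
  then show ?thesis unfolding rp1_def by (rule rf1_cong) simp
qed

lemma rp1_conj: "rp1 P \<Longrightarrow> rp1 Q \<Longrightarrow> rp1 (\<lambda>x. P x \<and> Q x)"
proof -
  assume "rp1 P" "rp1 Q"
  then have "rf1 (\<lambda>x. if P x then (if Q x then 1 else 0) else 0)"
    by (intro rf1_if rf1_const) (auto simp: rp1_def)
  then show ?thesis unfolding rp1_def by (rule rf1_cong) auto
qed

lemma rp1_disj: "rp1 P \<Longrightarrow> rp1 Q \<Longrightarrow> rp1 (\<lambda>x. P x \<or> Q x)"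
proof -
  assume "rp1 P" "rp1 Q"
  then have "rf1 (\<lambda>x. if P x then 1 else (if Q x then 1 else 0))"
    by (intro rf1_if rf1_const) (auto simp: rp1_def)
  then show ?thesis unfolding rp1_def by (rule rf1_cong) auto
qed

lemma rp1_imp: "rp1 P \<Longrightarrow> rp1 Q \<Longrightarrow> rp1 (\<lambda>x. P x \<longrightarrow> Q x)"
  by (rule rp1_cong[OF rp1_disj[OF rp1_not]]) auto

lemma rf1_rec:
  assumes B: "rf1 B" and N: "rf1 N" and S: "rf1 (\<lambda>z. S (pfst z) (pfst (psnd z)) (psnd (psnd z)))"
  shows "rf1 (\<lambda>x. rec_nat (B x) (\<lambda>n r. S n r x) (N x))"
proof -
  have c3: "cmp 3 (\<lambda>zs. prod_encode (zs!1, prod_encode (zs!0, zs!2)))"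
    by (intro cmp_comp2[OF cmp_pe] cmp_proj) auto
  have "cmp 3 (\<lambda>zs. (\<lambda>z. S (pfst z) (pfst (psnd z)) (psnd (psnd z))) (prod_encode (zs!1, prod_encode (zs!0, zs!2))))"
    by (rule rf1_cmp[OF S c3])
  then have G: "cmp (Suc (Suc 1)) (\<lambda>zs. S (zs!1) (zs!0) (zs!2))" by (simp add: numeral_3_eq_3)
  have F: "cmp 1 (\<lambda>ys. B (ys!0))" using B by (simp add: rf1_def)
  have "cmp (Suc 1) (\<lambda>xs. rec_nat ((\<lambda>ys. B (ys!0)) (tl xs)) (\<lambda>k r. (\<lambda>zs. S (zs!1) (zs!0) (zs!2)) (r # k # tl xs)) (hd xs))"
    by (rule cmp_prim[OF F G])
  then have R: "cmp 2 (\<lambda>xs. rec_nat (B (xs!1)) (\<lambda>n r. S n r (xs!1)) (xs!0))"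
  proof (rule cmp_cong')
    fix xs :: "nat list" assume "length xs = 2"
    then obtain a b where "xs = [a, b]" using len2 by blast
    then show "rec_nat ((\<lambda>ys. B (ys!0)) (tl xs)) (\<lambda>k r. (\<lambda>zs. S (zs!1) (zs!0) (zs!2)) (r # k # tl xs)) (hd xs) = rec_nat (B (xs!1)) (\<lambda>n r. S n r (xs!1)) (xs!0)"
      by simp
  qed simp
  have "cmp 1 (\<lambda>xs. (\<lambda>a b. rec_nat (B b) (\<lambda>n r. S n r b) a) (N (xs!0)) (xs!0))"
    by (rule cmp_comp2[OF R]) (use N in \<open>auto simp: rf1_def intro: cmp_proj\<close>)
  then show ?thesis by (simp add: rf1_def)
qed

lemma rf1_rec':
  assumes B: "rf1 B" and N: "rf1 N" and S: "rf1 (\<lambda>z. S (pfst z) (pfst (psnd z)) (psnd (psnd z)))"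
  shows "rf1 (\<lambda>x. rec_nat (B x) (\<lambda>n r. S n r x) (N x))"
  using rf1_rec[OF assms] .

lemma rec_mult_aux: "rec_nat 0 (\<lambda>n r. r + b) m = m * (b::nat)"
  by (induction m) auto

lemma rf1_mult: "rf1 A \<Longrightarrow> rf1 B \<Longrightarrow> rf1 (\<lambda>x. A x * B x)"
proof -
  assume A: "rf1 A" and B: "rf1 B"
  have "rf1 (\<lambda>x. rec_nat 0 (\<lambda>n r. r + B x) (A x))"
    by (rule rf1_rec[where S="\<lambda>n r x. r + B x"]) (intro rf1_const A rf1_add rf1_pfst rf1_psnd rf1_id rf1_comp[OF B])+
  then show ?thesis
  proof (rule rf1_cong)
    fix x show "rec_nat 0 (\<lambda>n r. r + B x) (A x) = A x * B x"
      by (rule rec_mult_aux)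
  qed
qed

lemma rp1_comp: "rp1 P \<Longrightarrow> rf1 G \<Longrightarrow> rp1 (\<lambda>x. P (G x))"
  unfolding rp1_def by (drule rf1_comp) auto

lemma rf1_2: "rf1 (\<lambda>z. f (pfst z) (psnd z)) \<Longrightarrow> rf1 A \<Longrightarrow> rf1 B \<Longrightarrow> rf1 (\<lambda>x. f (A x) (B x))"
  by (drule rf1_comp[OF _ rf1_pe]) auto

lemma rf1_3: "rf1 (\<lambda>z. f (pfst z) (pfst (psnd z)) (psnd (psnd z))) \<Longrightarrow> rf1 A \<Longrightarrow> rf1 B \<Longrightarrow> rf1 C \<Longrightarrow> rf1 (\<lambda>x. f (A x) (B x) (C x))"
  by (drule rf1_comp[OF _ rf1_pe[OF _ rf1_pe]]) auto

lemma rp1_2: "rp1 (\<lambda>z. f (pfst z) (psnd z)) \<Longrightarrow> rf1 A \<Longrightarrow> rf1 B \<Longrightarrow> rp1 (\<lambda>x. f (A x) (B x))"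
  by (drule rp1_comp[OF _ rf1_pe]) auto

lemma rp1_3: "rp1 (\<lambda>z. f (pfst z) (pfst (psnd z)) (psnd (psnd z))) \<Longrightarrow> rf1 A \<Longrightarrow> rf1 B \<Longrightarrow> rf1 C \<Longrightarrow> rp1 (\<lambda>x. f (A x) (B x) (C x))"
  by (drule rp1_comp[OF _ rf1_pe[OF _ rf1_pe]]) auto

lemma rp1_4: "rp1 (\<lambda>z. f (pfst z) (pfst (psnd z)) (pfst (psnd (psnd z))) (psnd (psnd (psnd z)))) \<Longrightarrow> rf1 A \<Longrightarrow> rf1 B \<Longrightarrow> rf1 C \<Longrightarrow> rf1 D \<Longrightarrow> rp1 (\<lambda>x. f (A x) (B x) (C x) (D x))"
  by (drule rp1_comp[OF _ rf1_pe[OF _ rf1_pe[OF _ rf1_pe]]]) auto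

lemma rf1_ind: "rp1 P \<Longrightarrow> rf1 (\<lambda>x. if P x then 1 else 0)"
  by (simp add: rp1_def)

named_theorems rfI
declare rf1_id[rfI] rf1_const[rfI] rf1_Suc[rfI] rf1_pfst[rfI] rf1_psnd[rfI] rf1_add[rfI]
  rf1_minus[rfI] rf1_pe[rfI] rf1_if[rfI] rp1_le[rfI] rp1_less[rfI] rp1_eq[rfI] rp1_const[rfI]
  rp1_not[rfI] rp1_conj[rfI] rp1_disj[rfI] rp1_imp[rfI] rf1_mult[rfI]

lemma rec_ex_aux: "rec_nat 0 (\<lambda>n r. if P n \<or> r \<noteq> 0 then 1 else 0) m = (if \<exists>y<m. P y then 1 else (0::nat))"
  by (induction m) (auto simp: less_Suc_eq)

lemma rp1_ex: "rp1 (\<lambda>z. P (pfst z) (psnd z)) \<Longrightarrow> rf1 B \<Longrightarrow> rp1 (\<lambda>x. \<exists>y<B x. P y x)"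
proof -
  assume p: "rp1 (\<lambda>z. P (pfst z) (psnd z))" and b: "rf1 B"
  have p2: "rp1 (\<lambda>z. P (pfst z) (psnd (psnd z)))"
    by (rule rp1_2[OF p]) (rule rfI)+
  have "rf1 (\<lambda>x. rec_nat 0 (\<lambda>n r. if P n x \<or> r \<noteq> 0 then 1 else 0) (B x))"
    by (rule rf1_rec[OF rf1_const b]) (rule rfI p2 | assumption)+
  then show ?thesis unfolding rp1_def by (rule rf1_cong) (rule rec_ex_aux)
qed

lemma rp1_all: "rp1 (\<lambda>z. P (pfst z) (psnd z)) \<Longrightarrow> rf1 B \<Longrightarrow> rp1 (\<lambda>x. \<forall>y<B x. P y x)"
proof -
  assume p: "rp1 (\<lambda>z. P (pfst z) (psnd z))" and b: "rf1 B"
  have "rp1 (\<lambda>x. \<not> (\<exists>y<B x. \<not> P y x))"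
    by (rule rp1_not, rule rp1_ex[OF rp1_not[OF p] b])
  then show ?thesis by (rule rp1_cong) auto
qed

definition bmin :: "nat \<Rightarrow> (nat \<Rightarrow> bool) \<Rightarrow> nat" where
  "bmin B P = rec_nat 0 (\<lambda>m r. if r < m then r else if P m then m else Suc m) B"

lemma bmin_eq: "bmin B P = (if \<exists>y<B. P y then (LEAST y. P y) else B)"
proof (induction B)
  case 0 then show ?case by (simp add: bmin_def)
next
  case (Suc B)
  have eq: "bmin (Suc B) P = (if bmin B P < B then bmin B P else if P B then B else Suc B)"
    by (simp add: bmin_def)
  show ?case
  proof (cases "\<exists>y<B. P y")
    case True
    then obtain y where y: "y < B" "P y" by blast
    have "(LEAST y. P y) \<le> y" using y(2) by (rule Least_le)
    then have lt: "(LEAST y. P y) < B" using y by simp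
    have b: "bmin B P = (LEAST y. P y)" using Suc.IH True by simp
    have "bmin (Suc B) P = (LEAST y. P y)" using eq b lt by simp
    moreover have "\<exists>y<Suc B. P y" using y by (intro exI[of _ y]) simp
    ultimately show ?thesis by simp
  next
    case False
    have nb: "bmin B P = B"
      using Suc.IH if_not_P[OF False, of "LEAST y. P y" B] by (rule trans)
    show ?thesis
    proof (cases "P B")
      case True
      have "(LEAST y. P y) = B"
      proof (rule Least_equality)
        show "P B" by (rule True)
        fix y assume "P y" then show "B \<le> y" using False not_le by blast
      qed
      moreover have "bmin (Suc B) P = B" using eq nb True by simp
      moreover have "\<exists>y<Suc B. P y" by (rule exI[of _ B]) (simp add: True)
      ultimately show ?thesis by simp
    next
      case F2: False
      have bs: "bmin (Suc B) P = Suc B" using eq nb F2 by simp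
      have nex: "\<not> (\<exists>y<Suc B. P y)" using False F2 less_Suc_eq by blast
      show ?thesis using bs if_not_P[OF nex, of "LEAST y. P y" "Suc B", symmetric] by (rule trans)
    qed
  qed
qed

lemma rf1_bmin: "rp1 (\<lambda>z. P (pfst z) (psnd z)) \<Longrightarrow> rf1 B \<Longrightarrow> rf1 (\<lambda>x. bmin (B x) (\<lambda>y. P y x))"
proof -
  assume p: "rp1 (\<lambda>z. P (pfst z) (psnd z))" and b: "rf1 B"
  have p2: "rp1 (\<lambda>z. P (pfst z) (psnd (psnd z)))"
    by (rule rp1_2[OF p]) (rule rfI)+
  have "rf1 (\<lambda>x. rec_nat 0 (\<lambda>m r. if r < m then r else if P m x then m else Suc m) (B x))"
    by (rule rf1_rec[OF rf1_const b]) (rule rfI p2 | assumption)+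
  then show ?thesis by (simp add: bmin_def)
qed

declare rp1_ex[rfI] rp1_all[rfI] rf1_bmin[rfI]

lemma rec_pow_aux: "rec_nat 1 (\<lambda>n r. r + r) m = (2::nat) ^ m"
  by (induction m) auto

lemma rf1_pow2[rfI]: "rf1 A \<Longrightarrow> rf1 (\<lambda>x. 2 ^ A x)"
proof -
  assume a: "rf1 A"
  have "rf1 (\<lambda>x. rec_nat 1 (\<lambda>n r. r + r) (A x))"
    by (rule rf1_rec[OF rf1_const a, where S="\<lambda>n r x. r + r"]) (rule rfI)+
  then show ?thesis by (rule rf1_cong) (rule rec_pow_aux)
qed

section \<open>Lists\<close>

definition lhd :: "nat \<Rightarrow> nat" where "lhd c = pfst (c - 1)"
definition ltl :: "nat \<Rightarrow> nat" where "ltl c = psnd (c - 1)"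
definition ldrop :: "nat \<Rightarrow> nat \<Rightarrow> nat" where "ldrop i c = rec_nat c (\<lambda>n r. ltl r) i"
definition lnth :: "nat \<Rightarrow> nat \<Rightarrow> nat" where "lnth c i = lhd (ldrop i c)"
definition llen :: "nat \<Rightarrow> nat" where "llen c = bmin (Suc c) (\<lambda>n. ldrop n c = 0)"

lemma ltl_cons[simp]: "ltl (list_encode (x # xs)) = list_encode xs"
  by (simp add: ltl_def psnd_def)
lemma lhd_cons[simp]: "lhd (list_encode (x # xs)) = x"
  by (simp add: lhd_def pfst_def)
lemma psnd_0: "psnd 0 = 0"
  using psnd_pe[of 0 0] by (simp add: prod_encode_def)

lemma ltl_tl: "ltl (list_encode ys) = list_encode (tl ys)"
  by (cases ys) (simp_all add: ltl_def psnd_0)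

lemma ldrop_Suc: "ldrop (Suc i) c = ltl (ldrop i c)"
  by (simp add: ldrop_def)

lemma ldrop_enc: "ldrop i (list_encode xs) = list_encode (drop i xs)"
proof (induction i arbitrary: xs)
  case 0 then show ?case by (simp add: ldrop_def)
next
  case (Suc i)
  have "ldrop (Suc i) (list_encode xs) = ltl (list_encode (drop i xs))"
    by (simp add: ldrop_Suc Suc)
  also have "\<dots> = list_encode (drop (Suc i) xs)"
    by (simp add: ltl_tl drop_Suc tl_drop)
  finally show ?case .
qed

lemma lnth_enc: "i < length xs \<Longrightarrow> lnth (list_encode xs) i = xs ! i"
  by (simp add: lnth_def ldrop_enc Cons_nth_drop_Suc[symmetric] lhd_def pfst_def)

lemma tri_ge: "n \<le> triangle n"
  by (induction n) auto

lemma le_pe2: "b \<le> prod_encode (a, b)"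
proof -
  have "b \<le> a + b" by simp
  also have "\<dots> \<le> triangle (a + b)" by (rule tri_ge)
  finally show ?thesis by (simp add: prod_encode_def)
qed

lemma length_le_enc: "length xs \<le> list_encode xs"
proof (induction xs)
  case Nil then show ?case by simp
next
  case (Cons x xs)
  then show ?case using le_pe2[of "list_encode xs" x] by simp
qed

lemma mem_le_enc: "x \<in> set xs \<Longrightarrow> x \<le> list_encode xs"
proof (induction xs)
  case Nil then show ?case by simp
next
  case (Cons y xs)
  have "y \<le> prod_encode (y, list_encode xs)" by (simp add: prod_encode_def)
  then show ?case using Cons le_pe2[of "list_encode xs" y] by auto
qed

lemma list_encode_0: "list_encode xs = 0 \<longleftrightarrow> xs = []"
  by (cases xs) auto

lemma llen_enc: "llen (list_encode xs) = length xs"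
proof -
  have l: "length xs < Suc (list_encode xs)" using length_le_enc[of xs] by simp
  have z: "ldrop (length xs) (list_encode xs) = 0" by (simp add: ldrop_enc)
  have ex: "\<exists>y<Suc (list_encode xs). ldrop y (list_encode xs) = 0"
    using l z by blast
  have "(LEAST y. ldrop y (list_encode xs) = 0) = length xs"
  proof (rule Least_equality)
    show "ldrop (length xs) (list_encode xs) = 0" by (rule z)
  next
    fix y assume "ldrop y (list_encode xs) = 0"
    then have "drop y xs = []" by (simp add: ldrop_enc list_encode_0)
    then show "length xs \<le> y" by simp
  qed
  then show ?thesis using ex by (simp add: llen_def bmin_eq)
qed

lemma rf1_ltl[rfI]: "rf1 A \<Longrightarrow> rf1 (\<lambda>x. ltl (A x))"
  unfolding ltl_def by (rule rfI | assumption)+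
lemma rf1_lhd[rfI]: "rf1 A \<Longrightarrow> rf1 (\<lambda>x. lhd (A x))"
  unfolding lhd_def by (rule rfI | assumption)+

lemma rf1_ldrop[rfI]: "rf1 A \<Longrightarrow> rf1 B \<Longrightarrow> rf1 (\<lambda>x. ldrop (A x) (B x))"
proof -
  assume a: "rf1 A" and b: "rf1 B"
  show ?thesis unfolding ldrop_def
    by (rule rf1_rec[OF b a, where S="\<lambda>n r x. ltl r"]) (rule rfI)+
qed

lemma rf1_lnth[rfI]: "rf1 A \<Longrightarrow> rf1 B \<Longrightarrow> rf1 (\<lambda>x. lnth (A x) (B x))"
  unfolding lnth_def by (rule rfI | assumption)+

lemma rf1_llen_core: "rf1 (\<lambda>x. llen x)"
  unfolding llen_def by (rule rfI | assumption)+

lemma rf1_llen[rfI]: "rf1 A \<Longrightarrow> rf1 (\<lambda>x. llen (A x))"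
  by (rule rf1_comp[OF rf1_llen_core])


lemma rf1_max[rfI]: "rf1 A \<Longrightarrow> rf1 B \<Longrightarrow> rf1 (\<lambda>x. max (A x) (B x))"
proof -
  assume "rf1 A" "rf1 B"
  then have "rf1 (\<lambda>x. if A x \<le> B x then B x else A x)" by (intro rf1_if rp1_le)
  then show ?thesis by (rule rf1_cong) (simp add: max_def)
qed

definition memb :: "nat \<Rightarrow> nat \<Rightarrow> bool" where
  "memb v l \<longleftrightarrow> (\<exists>j<llen l. lnth l j = v)"

lemma rp1_memb[rfI]: "rf1 A \<Longrightarrow> rf1 B \<Longrightarrow> rp1 (\<lambda>x. memb (A x) (B x))"
proof -
  have c: "rp1 (\<lambda>z. memb (pfst z) (psnd z))"
    unfolding memb_def by (rule rfI)+
  show "rf1 A \<Longrightarrow> rf1 B \<Longrightarrow> ?thesis" by (rule rp1_2[OF c])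
qed

definition lbnd :: "nat \<Rightarrow> nat \<Rightarrow> nat" where
  "lbnd m n = rec_nat 0 (\<lambda>k r. Suc (prod_encode (m, r))) n"

lemma rf1_lbnd[rfI]: "rf1 A \<Longrightarrow> rf1 B \<Longrightarrow> rf1 (\<lambda>x. lbnd (A x) (B x))"
proof -
  assume a: "rf1 A" and b: "rf1 B"
  have c: "rf1 (\<lambda>z. lbnd (pfst z) (psnd z))"
    unfolding lbnd_def
    by (rule rf1_rec[where S="\<lambda>k r z. Suc (prod_encode (pfst z, r))"]) (rule rfI)+
  show ?thesis by (rule rf1_2[OF c a b])
qed

definition nI :: "nat \<Rightarrow> nat" where "nI c = pfst c"
definition nF :: "nat \<Rightarrow> nat" where "nF c = pfst (psnd c)"
definition nT :: "nat \<Rightarrow> nat" where "nT c = psnd (psnd c)"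

definition accW :: "nat \<Rightarrow> nat \<Rightarrow> bool" where
  "accW c w \<longleftrightarrow> (\<exists>r<Suc (lbnd c (Suc (llen w))). llen r = Suc (llen w) \<and> memb (lnth r 0) (nI c)
      \<and> memb (lnth r (llen w)) (nF c)
      \<and> (\<forall>i<llen w. memb (prod_encode (lnth r i, prod_encode (lnth w i, lnth r (Suc i)))) (nT c)))"

definition eo :: "nat \<Rightarrow> nat \<Rightarrow> nat" where
  "eo u i = (if i < llen u then Suc (lnth u i) else 0)"

definition accC :: "nat \<Rightarrow> nat \<Rightarrow> nat \<Rightarrow> bool" where
  "accC c u v \<longleftrightarrow> (\<exists>r<Suc (lbnd c (Suc (max (llen u) (llen v)))). llen r = Suc (max (llen u) (llen v))
      \<and> memb (lnth r 0) (nI c)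
      \<and> memb (lnth r (max (llen u) (llen v))) (nF c)
      \<and> (\<forall>i<max (llen u) (llen v). memb (prod_encode (lnth r i, prod_encode (prod_encode (eo u i, eo v i), lnth r (Suc i)))) (nT c)))"

lemma rp1_accW[rfI]: "rf1 A \<Longrightarrow> rf1 B \<Longrightarrow> rp1 (\<lambda>x. accW (A x) (B x))"
proof -
  have c: "rp1 (\<lambda>z. accW (pfst z) (psnd z))"
    unfolding accW_def nI_def nF_def nT_def by (rule rfI)+
  show "rf1 A \<Longrightarrow> rf1 B \<Longrightarrow> ?thesis" by (rule rp1_2[OF c])
qed

lemma rp1_accC[rfI]: "rf1 A \<Longrightarrow> rf1 B \<Longrightarrow> rf1 C \<Longrightarrow> rp1 (\<lambda>x. accC (A x) (B x) (C x))"
proof -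
  have c: "rp1 (\<lambda>z. accC (pfst z) (pfst (psnd z)) (psnd (psnd z)))"
    unfolding accC_def nI_def nF_def nT_def eo_def by (rule rfI)+
  show "rf1 A \<Longrightarrow> rf1 B \<Longrightarrow> rf1 C \<Longrightarrow> ?thesis" by (rule rp1_3[OF c])
qed

definition K :: "nat \<Rightarrow> nat" where "K x = pfst x"
definition cL :: "nat \<Rightarrow> nat" where "cL x = pfst (psnd x)"
definition cEq :: "nat \<Rightarrow> nat" where "cEq x = pfst (psnd (psnd x))"
definition cMa :: "nat \<Rightarrow> nat" where "cMa x = pfst (psnd (psnd (psnd x)))"
definition cI :: "nat \<Rightarrow> nat" where "cI x = psnd (psnd (psnd (psnd x)))"

lemmas cdefs = K_def cL_def cEq_def cMa_def cI_def

definition inE :: "nat \<Rightarrow> nat \<Rightarrow> bool" where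
  "inE x w \<longleftrightarrow> accW (cL x) w \<and> (\<forall>a<K x. accC (lnth (cMa x) a) w (lnth (cI x) a))"

definition Bnd :: "nat \<Rightarrow> nat" where "Bnd x = cI x + 2 ^ ((K x + 1) * (x + 1))"
definition WB :: "nat \<Rightarrow> nat" where "WB x = lbnd (K x) (Bnd x)"
definition hasE :: "nat \<Rightarrow> bool" where "hasE x \<longleftrightarrow> (\<exists>w<Suc (WB x). inE x w)"
definition wsel :: "nat \<Rightarrow> nat" where "wsel x = bmin (Suc (WB x)) (\<lambda>w. inE x w)"

definition validChain :: "nat \<Rightarrow> nat \<Rightarrow> nat \<Rightarrow> nat \<Rightarrow> bool" where
  "validChain x w a ch \<longleftrightarrow> llen ch = Suc (llen w) \<and> lnth ch 0 = lnth (cI x) a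
     \<and> (\<forall>j<llen w. accC (lnth (cMa x) (lnth w j)) (lnth ch j) (lnth ch (Suc j)))"

definition validCert :: "nat \<Rightarrow> nat \<Rightarrow> nat \<Rightarrow> bool" where
  "validCert x w c \<longleftrightarrow> llen c = K x \<and> (\<forall>a<K x. validChain x w a (lnth c a))"

definition okC :: "nat \<Rightarrow> nat \<Rightarrow> nat \<Rightarrow> bool" where
  "okC x w c \<longleftrightarrow> (\<forall>a<K x. accC (cEq x) (lnth (lnth c a) (llen w)) (lnth (cI x) a))"

definition Qc :: "nat \<Rightarrow> nat \<Rightarrow> bool" where
  "Qc c x \<longleftrightarrow> \<not> hasE x \<or> validCert x (wsel x) c"

definition Hc :: "nat \<Rightarrow> nat \<Rightarrow> nat" where
  "Hc c x = (if hasE x \<and> okC x (wsel x) c then Suc (wsel x) else 0)"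

lemma rp1_inE[rfI]: "rf1 A \<Longrightarrow> rf1 B \<Longrightarrow> rp1 (\<lambda>x. inE (A x) (B x))"
proof -
  have c: "rp1 (\<lambda>z. inE (pfst z) (psnd z))"
    unfolding inE_def cdefs by (rule rfI)+
  show "rf1 A \<Longrightarrow> rf1 B \<Longrightarrow> ?thesis" by (rule rp1_2[OF c])
qed

lemma rf1_WB[rfI]: "rf1 A \<Longrightarrow> rf1 (\<lambda>x. WB (A x))"
proof -
  have c: "rf1 (\<lambda>z. WB z)"
    unfolding WB_def Bnd_def cdefs by (rule rfI)+
  show "rf1 A \<Longrightarrow> ?thesis" by (rule rf1_comp[OF c])
qed

lemma rp1_hasE[rfI]: "rf1 A \<Longrightarrow> rp1 (\<lambda>x. hasE (A x))"
proof -
  have c: "rp1 (\<lambda>z. hasE z)"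
    unfolding hasE_def by (rule rfI)+
  show "rf1 A \<Longrightarrow> ?thesis" by (rule rp1_comp[OF c])
qed

lemma rf1_wsel[rfI]: "rf1 A \<Longrightarrow> rf1 (\<lambda>x. wsel (A x))"
proof -
  have c: "rf1 (\<lambda>z. wsel z)"
    unfolding wsel_def by (rule rfI)+
  show "rf1 A \<Longrightarrow> ?thesis" by (rule rf1_comp[OF c])
qed

lemma rp1_validChain[rfI]: "rf1 A \<Longrightarrow> rf1 B \<Longrightarrow> rf1 C \<Longrightarrow> rf1 D \<Longrightarrow> rp1 (\<lambda>x. validChain (A x) (B x) (C x) (D x))"
proof -
  have c: "rp1 (\<lambda>z. validChain (pfst z) (pfst (psnd z)) (pfst (psnd (psnd z))) (psnd (psnd (psnd z))))"
    unfolding validChain_def cdefs by (rule rfI)+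
  show "rf1 A \<Longrightarrow> rf1 B \<Longrightarrow> rf1 C \<Longrightarrow> rf1 D \<Longrightarrow> ?thesis" by (rule rp1_4[OF c])
qed

lemma rp1_Qc: "rp1 (\<lambda>z. Qc (pfst z) (psnd z))"
  unfolding Qc_def validCert_def cdefs by (rule rfI)+

lemma rf1_Hc: "rf1 (\<lambda>z. Hc (pfst z) (psnd z))"
  unfolding Hc_def okC_def cdefs by (rule rfI)+

lemma mu_main:
  assumes q: "rp1 (\<lambda>z. Q (pfst z) (psnd z))" and h: "rf1 (\<lambda>z. H (pfst z) (psnd z))"
  shows "\<exists>P. \<forall>x. (\<exists>c. Q c x) \<longrightarrow> eval P [x] (H (LEAST c. Q c x) x)"
proof -
  have "cmp 2 (\<lambda>xs. 1 - (\<lambda>z. if Q (pfst z) (psnd z) then 1 else 0) (prod_encode (xs!0, xs!1)))"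
    by (rule cmp_comp2[OF cmp_minus cmp_const], rule rf1_cmp[OF q[unfolded rp1_def]])
       (rule cmp_comp2[OF cmp_pe]; rule cmp_proj; simp)
  then obtain PQ where PQ: "\<And>xs. length xs = 2 \<Longrightarrow> eval PQ xs (1 - (if Q (xs!0) (xs!1) then 1 else 0))"
    unfolding cmp_def by auto
  obtain PH where PH: "\<And>xs. length xs = 1 \<Longrightarrow> eval PH xs (H (pfst (xs!0)) (psnd (xs!0)))"
    using h unfolding rf1_def cmp_def by auto
  obtain PE where PE: "\<And>xs. length xs = 2 \<Longrightarrow> eval PE xs (prod_encode (xs!0, xs!1))"
    using cmp_pe unfolding cmp_def by auto
  show ?thesis
  proof (intro exI[of _ "Comp PH [Comp PE [Mu PQ, Proj 0]]"] allI impI)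
    fix x assume ex: "\<exists>c. Q c x"
    let ?n = "LEAST c. Q c x"
    have qn: "Q ?n x" using ex by (metis LeastI)
    have mu: "eval (Mu PQ) [x] ?n"
    proof (rule ev_Mu)
      show "eval PQ [?n, x] 0" using PQ[of "[?n, x]"] qn by simp
      show "\<forall>m<?n. \<exists>y. eval PQ [m, x] (Suc y)"
      proof (intro allI impI)
        fix m assume "m < ?n"
        then have "\<not> Q m x" using not_less_Least by blast
        then show "\<exists>y. eval PQ [m, x] (Suc y)" using PQ[of "[m, x]"] by (intro exI[of _ 0]) simp
      qed
    qed
    have pr: "eval (Comp PE [Mu PQ, Proj 0]) [x] (prod_encode (?n, x))"
      by (rule ev_Comp[where ys="[?n, x]"]) (use mu PE[of "[?n, x]"] in \<open>auto simp: less_Suc_eq intro: ev_Proj[of 0 "[x]", simplified]\<close>)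
    show "eval (Comp PH [Comp PE [Mu PQ, Proj 0]]) [x] (H ?n x)"
      by (rule ev_Comp[where ys="[prod_encode (?n, x)]"]) (use pr PH[of "[prod_encode (?n, x)]"] in auto)
  qed
qed

lemma alg_exists: "\<exists>P. \<forall>x. (\<exists>c. Qc c x) \<longrightarrow> eval P [x] (Hc (LEAST c. Qc c x) x)"
  by (rule mu_main[OF rp1_Qc rf1_Hc])


lemma reach_runs:
  "q \<in> reach T Q xs \<longleftrightarrow> (\<exists>r. length r = Suc (length xs) \<and> r!0 \<in> Q \<and> r!(length xs) = q
      \<and> (\<forall>i<length xs. (r!i, xs!i, r!Suc i) \<in> set T))"
proof (induction xs arbitrary: Q)
  case Nil
  show ?case
  proof
    assume "q \<in> reach T Q []" then show "\<exists>r. length r = Suc (length []) \<and> r!0 \<in> Q \<and> r!(length []) = q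
      \<and> (\<forall>i<length []. (r!i, []!i, r!Suc i) \<in> set T)" by (intro exI[of _ "[q]"]) auto
  next
    assume "\<exists>r. length r = Suc (length []) \<and> r!0 \<in> Q \<and> r!(length []) = q
      \<and> (\<forall>i<length []. (r!i, []!i, r!Suc i) \<in> set T)"
    then show "q \<in> reach T Q []" by auto
  qed
next
  case (Cons a xs)
  let ?Q' = "{q'. \<exists>q\<in>Q. (q, a, q') \<in> set T}"
  have "q \<in> reach T Q (a # xs) \<longleftrightarrow> q \<in> reach T ?Q' xs" by simp
  also have "\<dots> \<longleftrightarrow> (\<exists>r. length r = Suc (length xs) \<and> r!0 \<in> ?Q' \<and> r!(length xs) = q
      \<and> (\<forall>i<length xs. (r!i, xs!i, r!Suc i) \<in> set T))" by (rule Cons.IH)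
  also have "\<dots> \<longleftrightarrow> (\<exists>r. length r = Suc (length (a#xs)) \<and> r!0 \<in> Q \<and> r!(length (a#xs)) = q
      \<and> (\<forall>i<length (a#xs). (r!i, (a#xs)!i, r!Suc i) \<in> set T))" (is "?L \<longleftrightarrow> ?R")
  proof
    assume ?L
    then obtain r q0 where r: "length r = Suc (length xs)" "r!0 \<in> ?Q'" "r!(length xs) = q"
      "\<forall>i<length xs. (r!i, xs!i, r!Suc i) \<in> set T" by blast
    then obtain q0 where q0: "q0 \<in> Q" "(q0, a, r!0) \<in> set T" by blast
    show ?R
    proof (intro exI[of _ "q0 # r"] conjI allI impI)
      fix i assume "i < length (a # xs)"
      then show "((q0 # r) ! i, (a # xs) ! i, (q0 # r) ! Suc i) \<in> set T"
        using r q0 by (cases i) auto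
    qed (use r q0 in auto)
  next
    assume ?R
    then obtain r where r: "length r = Suc (length (a#xs))" "r!0 \<in> Q" "r!(length (a#xs)) = q"
      "\<forall>i<length (a#xs). (r!i, (a#xs)!i, r!Suc i) \<in> set T" by blast
    then obtain q0 r' where rr: "r = q0 # r'" by (cases r) auto
    show ?L
    proof (intro exI[of _ r'] conjI allI impI)
      show "r' ! 0 \<in> ?Q'" using r(2) r(4)[rule_format, of 0] rr by auto
      fix i assume "i < length xs"
      then show "(r' ! i, xs ! i, r' ! Suc i) \<in> set T" using r(4)[rule_format, of "Suc i"] rr by auto
    qed (use r rr in auto)
  qed
  finally show ?case .
qed

lemma accepts_runs:
  "accepts (I, F, T) xs \<longleftrightarrow> (\<exists>r. length r = Suc (length xs) \<and> r!0 \<in> set I \<and> r!(length xs) \<in> set F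
      \<and> (\<forall>i<length xs. (r!i, xs!i, r!Suc i) \<in> set T))"
proof -
  have "accepts (I, F, T) xs \<longleftrightarrow> (\<exists>q. q \<in> reach T (set I) xs \<and> q \<in> set F)"
    by (auto simp: accepts_def)
  also have "\<dots> \<longleftrightarrow> (\<exists>r. length r = Suc (length xs) \<and> r!0 \<in> set I \<and> r!(length xs) \<in> set F
      \<and> (\<forall>i<length xs. (r!i, xs!i, r!Suc i) \<in> set T))"
    unfolding reach_runs by blast
  finally show ?thesis .
qed

lemma memb_enc: "memb v (list_encode l) \<longleftrightarrow> v \<in> set l"
  by (auto simp: memb_def llen_enc lnth_enc in_set_conv_nth)

lemma triangle_mono: "a \<le> b \<Longrightarrow> triangle a \<le> triangle b"
  by (induction b rule: dec_induct) auto

lemma pe_mono: "a \<le> a' \<Longrightarrow> b \<le> b' \<Longrightarrow> prod_encode (a, b) \<le> prod_encode (a', b')"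
  unfolding prod_encode_def using triangle_mono[of "a + b" "a' + b'"] by simp

lemma le_pe1: "a \<le> prod_encode (a, b)"
  by (simp add: prod_encode_def)

lemma lbnd_bound: "(\<forall>y\<in>set r. y \<le> m) \<Longrightarrow> list_encode r \<le> lbnd m (length r)"
proof (induction r)
  case Nil then show ?case by (simp add: lbnd_def)
next
  case (Cons y r)
  then have "prod_encode (y, list_encode r) \<le> prod_encode (m, lbnd m (length r))"
    by (intro pe_mono) auto
  then show ?case by (simp add: lbnd_def)
qed

definition tenc :: "('l \<Rightarrow> nat) \<Rightarrow> nat \<times> 'l \<times> nat \<Rightarrow> nat" where
  "tenc e t = (case t of (p, a, q) \<Rightarrow> prod_encode (p, prod_encode (e a, q)))"

lemma enc_nfa_eq: "enc_nfa e (I, F, T) = prod_encode (list_encode I, prod_encode (list_encode F, list_encode (map (tenc e) T)))"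
proof -
  have "tenc e = (\<lambda>(p, a, q). prod_encode (p, prod_encode (e a, q)))"
    by (rule ext) (simp add: tenc_def)
  then show ?thesis by (simp add: enc_nfa_def)
qed

definition accG :: "nat \<Rightarrow> nat \<Rightarrow> (nat \<Rightarrow> nat) \<Rightarrow> bool" where
  "accG c n L \<longleftrightarrow> (\<exists>r<Suc (lbnd c (Suc n)). llen r = Suc n \<and> memb (lnth r 0) (nI c)
      \<and> memb (lnth r n) (nF c)
      \<and> (\<forall>i<n. memb (prod_encode (lnth r i, prod_encode (L i, lnth r (Suc i)))) (nT c)))"

lemma accW_G: "accW c w = accG c (llen w) (lnth w)"
  unfolding accW_def accG_def ..

lemma accC_G: "accC c u v = accG c (max (llen u) (llen v)) (\<lambda>i. prod_encode (eo u i, eo v i))"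
  unfolding accC_def accG_def ..

lemma accG_correct:
  assumes e: "inj e"
  shows "accG (enc_nfa e (I, F, T)) (length xs) (\<lambda>i. e (xs!i)) \<longleftrightarrow> accepts (I, F, T) xs"
proof -
  let ?c = "enc_nfa e (I, F, T)"
  let ?n = "length xs"
  have nI: "nI ?c = list_encode I" and nF: "nF ?c = list_encode F"
    and nT: "nT ?c = list_encode (map (tenc e) T)"
    by (simp_all add: enc_nfa_eq nI_def nF_def nT_def)
  have tr: "prod_encode (p, prod_encode (e a, q)) \<in> tenc e ` set T \<longleftrightarrow> (p, a, q) \<in> set T" for p a q
  proof
    assume "prod_encode (p, prod_encode (e a, q)) \<in> tenc e ` set T"
    then obtain t where t: "t \<in> set T" "tenc e t = prod_encode (p, prod_encode (e a, q))" by auto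
    obtain p' a' q' where "t = (p', a', q')" by (cases t) auto
    then show "(p, a, q) \<in> set T" using t e by (auto simp: tenc_def dest: injD)
  qed (force simp: tenc_def)
  show ?thesis
  proof
    assume "accG ?c ?n (\<lambda>i. e (xs!i))"
    then obtain rc where rc: "llen rc = Suc ?n" "memb (lnth rc 0) (nI ?c)" "memb (lnth rc ?n) (nF ?c)"
      "\<forall>i<?n. memb (prod_encode (lnth rc i, prod_encode (e (xs!i), lnth rc (Suc i)))) (nT ?c)"
      unfolding accG_def by blast
    define r where "r = list_decode rc"
    have rc_eq: "rc = list_encode r" by (simp add: r_def)
    have len: "length r = Suc ?n" using rc(1) by (simp add: rc_eq llen_enc)
    have nth: "lnth rc i = r!i" if "i < Suc ?n" for i using that len by (simp add: rc_eq lnth_enc)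
    show "accepts (I, F, T) xs"
      unfolding accepts_runs
    proof (intro exI[of _ r] conjI allI impI)
      show "length r = Suc ?n" by (rule len)
      show "r!0 \<in> set I" using rc(2) nth[of 0] by (simp add: nI memb_enc)
      show "r!?n \<in> set F" using rc(3) nth[of ?n] by (simp add: nF memb_enc)
      fix i assume i: "i < ?n"
      then show "(r!i, xs!i, r!Suc i) \<in> set T"
        using rc(4)[rule_format, OF i] nth[of i] nth[of "Suc i"] by (simp add: nT memb_enc tr)
    qed
  next
    assume "accepts (I, F, T) xs"
    then obtain r where r: "length r = Suc ?n" "r!0 \<in> set I" "r!?n \<in> set F"
      "\<forall>i<?n. (r!i, xs!i, r!Suc i) \<in> set T" unfolding accepts_runs by blast
    have bnd: "\<forall>y\<in>set r. y \<le> ?c"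
    proof
      fix y assume "y \<in> set r"
      then obtain j where j: "j < Suc ?n" "y = r!j" using r(1) by (auto simp: in_set_conv_nth)
      show "y \<le> ?c"
      proof (cases j)
        case 0
        then have "y \<le> list_encode I" using j r(2) by (simp add: mem_le_enc)
        also have "\<dots> \<le> ?c" by (simp add: enc_nfa_eq le_pe1)
        finally show ?thesis .
      next
        case (Suc i)
        then have i: "i < ?n" using j by simp
        have "tenc e (r!i, xs!i, y) \<in> set (map (tenc e) T)" using r(4) i j Suc by auto
        then have "tenc e (r!i, xs!i, y) \<le> list_encode (map (tenc e) T)" by (rule mem_le_enc)
        moreover have "y \<le> tenc e (r!i, xs!i, y)"
          by (simp add: tenc_def) (metis le_pe2 le_trans)
        moreover have "list_encode (map (tenc e) T) \<le> ?c"
          by (simp add: enc_nfa_eq) (metis le_pe2 le_trans)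
        ultimately show ?thesis by linarith
      qed
    qed
    have "list_encode r \<le> lbnd ?c (Suc ?n)" using lbnd_bound[OF bnd] r(1) by simp
    then show "accG ?c ?n (\<lambda>i. e (xs!i))" unfolding accG_def
      using r by (intro exI[of _ "list_encode r"])
        (auto simp: llen_enc lnth_enc nI nF nT memb_enc tr)
  qed
qed

lemma accW_correct: "accW (enc_nfa id M) (list_encode w) \<longleftrightarrow> accepts M w"
proof -
  obtain I F T where M: "M = (I, F, T)" by (cases M) auto
  have "accW (enc_nfa id M) (list_encode w) = accG (enc_nfa id (I, F, T)) (length w) (\<lambda>i. id (w!i))"
    unfolding accW_G M llen_enc accG_def
    by (intro ex_cong1 conj_cong refl all_cong1 imp_cong) (auto simp: lnth_enc)
  also have "\<dots> = accepts M w" using accG_correct[of id] M by simp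
  finally show ?thesis .
qed

lemma length_conv[simp]: "length (conv u v) = max (length u) (length v)"
  by (simp add: conv_def)

lemma nth_conv: "i < max (length u) (length v) \<Longrightarrow> conv u v ! i =
   (if i < length u then Some (u ! i) else None, if i < length v then Some (v ! i) else None)"
  by (simp add: conv_def)

lemma accC_correct: "accC (enc_nfa enc_pletter M) (list_encode u) (list_encode v) \<longleftrightarrow> accepts M (conv u v)"
proof -
  obtain I F T where M: "M = (I, F, T)" by (cases M) auto
  have inj: "inj enc_pletter"
  proof (rule injI)
    fix p q assume "enc_pletter p = enc_pletter q"
    then have "enc_opt (fst p) = enc_opt (fst q)" "enc_opt (snd p) = enc_opt (snd q)"
      by (auto simp: enc_pletter_def)
    then have "fst p = fst q" "snd p = snd q"
      by (auto simp: enc_opt_def split: option.splits)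
    then show "p = q" by (simp add: prod_eq_iff)
  qed
  have "accC (enc_nfa enc_pletter M) (list_encode u) (list_encode v)
      = accG (enc_nfa enc_pletter (I, F, T)) (length (conv u v)) (\<lambda>i. enc_pletter (conv u v ! i))"
    unfolding accC_G M llen_enc accG_def length_conv
    by (intro ex_cong1 conj_cong refl all_cong1 imp_cong)
      (auto simp: nth_conv eo_def lnth_enc llen_enc enc_pletter_def enc_opt_def)
  also have "\<dots> = accepts M (conv u v)" using accG_correct[OF inj, of I F T "conv u v"] M by simp
  finally show ?thesis .
qed

lemma conv_inj: "conv u v = conv u' v' \<Longrightarrow> u = u' \<and> v = v'"
proof -
  assume eq: "conv u v = conv u' v'"
  then have m: "max (length u) (length v) = max (length u') (length v')"
    by (metis length_conv)
  have f: "(if i < length u then Some (u ! i) else None) = (if i < length u' then Some (u' ! i) else None)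
   \<and> (if i < length v then Some (v ! i) else None) = (if i < length v' then Some (v' ! i) else None)"
    if i: "i < max (length u) (length v)" for i
  proof -
    have "conv u v ! i = conv u' v' ! i" using eq by simp
    then show ?thesis using nth_conv[OF i] nth_conv[of i u' v'] i m by simp
  qed
  have lu: "length u = length u'"
  proof (rule ccontr)
    assume "length u \<noteq> length u'"
    then consider "length u < length u'" | "length u' < length u" by linarith
    then show False
    proof cases
      case 1
      have lt: "length u < max (length u) (length v)" unfolding m using 1 by simp
      show ?thesis using f[OF lt] 1 by simp
    next
      case 2
      have lt: "length u' < max (length u) (length v)" using 2 by simp
      show ?thesis using f[OF lt] 2 by simp
    qed
  qed
  have lv: "length v = length v'"
  proof (rule ccontr)
    assume "length v \<noteq> length v'"
    then consider "length v < length v'" | "length v' < length v" by linarith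
    then show False
    proof cases
      case 1
      have lt: "length v < max (length u) (length v)" unfolding m using 1 by simp
      show ?thesis using f[OF lt] 1 by simp
    next
      case 2
      have lt: "length v' < max (length u) (length v)" using 2 by simp
      show ?thesis using f[OF lt] 2 by simp
    qed
  qed
  have "u = u'"
  proof (rule nth_equalityI)
    show "length u = length u'" by (rule lu)
    fix i assume i: "i < length u"
    then have "i < max (length u) (length v)" by simp
    from f[OF this] i lu show "u ! i = u' ! i" by simp
  qed
  moreover have "v = v'"
  proof (rule nth_equalityI)
    show "length v = length v'" by (rule lv)
    fix i assume i: "i < length v"
    then have "i < max (length u) (length v)" by simp
    from f[OF this] i lv show "v ! i = v' ! i" by simp
  qed
  ultimately show ?thesis by simp
qed

lemma conv_append: "length v \<le> length u \<Longrightarrow> conv (u @ s) v = conv u v @ map (\<lambda>b. (Some b, None)) s"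
  by (rule nth_equalityI) (auto simp: nth_conv nth_append max_def split: if_splits)

lemma reach_append: "reach T Q (x @ y) = reach T (reach T Q x) y"
  by (induction x arbitrary: Q) auto


definition sbound :: "nat \<Rightarrow> 'l nfa \<Rightarrow> bool" where
  "sbound N M \<longleftrightarrow> (\<forall>q\<in>set (fst M). q \<le> N) \<and> (\<forall>t\<in>set (snd (snd M)). snd (snd t) \<le> N)"

lemma reach_sub: "q \<in> reach T Q w \<Longrightarrow> q \<in> Q \<or> (\<exists>t\<in>set T. snd (snd t) = q)"
  by (induction w arbitrary: Q) force+

lemma accepts_reach: "accepts M w \<longleftrightarrow> reach (snd (snd M)) (set (fst M)) w \<inter> set (fst (snd M)) \<noteq> {}"
  by (cases M) (auto simp: accepts_def)

lemma reach_bound: "sbound N M \<Longrightarrow> q \<in> reach (snd (snd M)) (set (fst M)) w \<Longrightarrow> q \<le> N"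
  unfolding sbound_def by (drule reach_sub) auto

lemma pumping:
  fixes M0 :: "nat nfa" and Ms :: "pletter nfa list" and vs :: "nat list list"
  assumes b0: "sbound N M0" and bs: "\<And>a. a < k \<Longrightarrow> sbound N (Ms ! a)"
    and lv: "\<And>a. a < k \<Longrightarrow> length (vs ! a) \<le> m"
  shows "accepts M0 w \<and> (\<forall>a<k. accepts (Ms!a) (conv w (vs!a))) \<Longrightarrow>
     \<exists>w'. accepts M0 w' \<and> (\<forall>a<k. accepts (Ms!a) (conv w' (vs!a))) \<and> length w' \<le> m + 2 ^ ((k+1)*(N+1))"
proof (induction "length w" arbitrary: w rule: less_induct)
  case less
  let ?D = "(k+1)*(N+1)"
  show ?case
  proof (cases "length w \<le> m + 2 ^ ?D")
    case True then show ?thesis using less.prems by blast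
  next
    case False
    define st0 where "st0 z = reach (snd (snd M0)) (set (fst M0)) z" for z
    define sta where "sta a z = reach (snd (snd (Ms!a))) (set (fst (Ms!a))) (conv z (vs!a))" for a z
    define cfg where "cfg z = {(0, q) | q. q \<in> st0 z} \<union> {(Suc a, q) | a q. a < k \<and> q \<in> sta a z}" for z
    define Y where "Y = {0..k} \<times> {0..N}"
    have cfgY: "cfg z \<in> Pow Y" for z
      unfolding cfg_def Y_def st0_def sta_def using reach_bound[OF b0] reach_bound[OF bs] by auto
    have cY: "card (Pow Y) = 2 ^ ?D" unfolding Y_def by (simp add: card_Pow card_cartesian_product)
    let ?A = "{m..length w}"
    have cA: "card ?A > 2 ^ ?D" using False by simp
    have "\<not> inj_on (\<lambda>j. cfg (take j w)) ?A"
    proof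
      assume "inj_on (\<lambda>j. cfg (take j w)) ?A"
      moreover have "(\<lambda>j. cfg (take j w)) ` ?A \<subseteq> Pow Y" using cfgY by blast
      moreover have "finite (Pow Y)" by (simp add: Y_def)
      ultimately have "card ?A \<le> card (Pow Y)"
        by (rule card_inj_on_le)
      then show False using cA cY by simp
    qed
    then obtain i j where ij: "i \<in> ?A" "j \<in> ?A" "i \<noteq> j" "cfg (take i w) = cfg (take j w)"
      unfolding inj_on_def by blast
    then obtain i j where ij: "m \<le> i" "i < j" "j \<le> length w" "cfg (take i w) = cfg (take j w)"
      by (metis atLeastAtMost_iff linorder_neqE_nat)
    have e0: "st0 (take i w) = st0 (take j w)"
      using ij(4) unfolding cfg_def by (auto simp: set_eq_iff)
    have ea: "sta a (take i w) = sta a (take j w)" if "a < k" for a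
      using ij(4) that unfolding cfg_def by (auto simp: set_eq_iff)
    define w' where "w' = take i w @ drop j w"
    have w: "w = take j w @ drop j w" by simp
    have lw': "length w' < length w" using ij by (simp add: w'_def)
    have li: "length (take i w) = i" "length (take j w) = j" using ij by auto
    have s0: "st0 w' = st0 w"
    proof -
      have "st0 w' = reach (snd (snd M0)) (st0 (take i w)) (drop j w)"
        by (simp add: st0_def w'_def reach_append)
      also have "\<dots> = reach (snd (snd M0)) (st0 (take j w)) (drop j w)" by (simp add: e0)
      also have "\<dots> = st0 w" by (simp add: st0_def reach_append[symmetric])
      finally show ?thesis .
    qed
    have sa: "sta a w' = sta a w" if a: "a < k" for a
    proof -
      have l1: "length (vs!a) \<le> length (take i w)" using lv[OF a] ij li by simp
      have l2: "length (vs!a) \<le> length (take j w)" using lv[OF a] ij li by simp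
      have "sta a w' = reach (snd (snd (Ms!a))) (sta a (take i w)) (map (\<lambda>b. (Some b, None)) (drop j w))"
        by (simp add: sta_def w'_def conv_append[OF l1] reach_append)
      also have "\<dots> = reach (snd (snd (Ms!a))) (sta a (take j w)) (map (\<lambda>b. (Some b, None)) (drop j w))"
        by (simp add: ea[OF a])
      also have "\<dots> = sta a (take j w @ drop j w)"
        by (simp only: sta_def conv_append[OF l2] reach_append)
      also have "\<dots> = sta a w" by simp
      finally show ?thesis .
    qed
    have "accepts M0 w' \<and> (\<forall>a<k. accepts (Ms!a) (conv w' (vs!a)))"
      using less.prems s0 sa unfolding accepts_reach st0_def sta_def by simp
    then show ?thesis using less.hyps[OF lw'] by blast
  qed
qed


lemma pfst_le: "pfst z \<le> z"
  by (metis le_pe1 pfst_def prod.collapse prod_decode_inverse)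
lemma psnd_le: "psnd z \<le> z"
  by (metis le_pe2 psnd_def prod.collapse prod_decode_inverse)

lemma sbound_enc: "sbound (enc_nfa e M) M"
proof -
  obtain I F T where M: "M = (I, F, T)" by (cases M) auto
  have "\<forall>q\<in>set I. q \<le> enc_nfa e M"
  proof
    fix q assume "q \<in> set I"
    then have "q \<le> list_encode I" by (rule mem_le_enc)
    also have "\<dots> \<le> enc_nfa e M" by (simp add: M enc_nfa_eq le_pe1)
    finally show "q \<le> enc_nfa e M" .
  qed
  moreover have "\<forall>t\<in>set T. snd (snd t) \<le> enc_nfa e M"
  proof
    fix t assume t: "t \<in> set T"
    obtain p a q where tt: "t = (p, a, q)" by (cases t) auto
    have "q \<le> tenc e t" by (simp add: tt tenc_def) (metis le_pe2 le_trans)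
    also have "\<dots> \<le> list_encode (map (tenc e) T)" using t by (intro mem_le_enc) auto
    also have "\<dots> \<le> enc_nfa e M" by (simp add: M enc_nfa_eq) (metis le_pe2 le_trans)
    finally show "snd (snd t) \<le> enc_nfa e M" by (simp add: tt)
  qed
  ultimately show ?thesis by (simp add: sbound_def M)
qed

lemma sbound_mono: "sbound N M \<Longrightarrow> N \<le> N' \<Longrightarrow> sbound N' M"
  unfolding sbound_def by force

lemma lbnd_mono: "n \<le> n' \<Longrightarrow> lbnd m n \<le> lbnd m n'"
proof (induction n' rule: dec_induct)
  case base then show ?case by simp
next
  case (step n')
  have "lbnd m n' \<le> prod_encode (m, lbnd m n')" by (rule le_pe2)
  then show ?case using step by (simp add: lbnd_def)
qed

lemma sync_in_L:
  assumes "sync_recognises M R" "R \<subseteq> A \<times> A" "accepts M (conv u v)"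
  shows "(u, v) \<in> R"
proof -
  have "conv u v \<in> lang M" using assms(3) by (simp add: lang_def)
  then obtain u' v' where "(u', v') \<in> R" "conv u v = conv u' v'"
    using assms(1) unfolding sync_recognises_def by auto
  then show ?thesis using conv_inj by metis
qed

lemma wv_snoc: "w \<noteq> [] \<Longrightarrow> word_val f g (w @ [b]) = f (word_val f g w) (g b)"
  by (cases w) auto

lemma wv_single[simp]: "word_val f g [b] = g b" by simp

locale msetting =
  fixes k :: nat and ML0 :: "nat nfa" and Meq :: "pletter nfa" and Ma :: "pletter nfa list"
    and io :: "nat list list" and S :: "'a set" and f :: "'a \<Rightarrow> 'a \<Rightarrow> 'a" and g :: "nat \<Rightarrow> 'a"
  assumes sg: "semigroup_on S f" and desc: "describes (k, ML0, Meq, Ma) io S f g"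
begin

abbreviation "\<Gamma> \<equiv> (k, ML0, Meq, Ma)"
abbreviation "L \<equiv> lang ML0"
abbreviation "\<sigma> \<equiv> word_val f g"
abbreviation "x \<equiv> enc_input \<Gamma> io"

lemma closed: "a \<in> S \<Longrightarrow> b \<in> S \<Longrightarrow> f a b \<in> S" using sg by (simp add: semigroup_on_def)
lemma assoc: "a \<in> S \<Longrightarrow> b \<in> S \<Longrightarrow> c \<in> S \<Longrightarrow> f (f a b) c = f a (f b c)" using sg by (simp add: semigroup_on_def)

lemma L_lists: "L \<subseteq> lists {..<k}" using desc by (simp add: describes_def pre_automatic_def)
lemma len_Ma: "length Ma = k" using desc by (simp add: describes_def pre_automatic_def)
lemma Ma_R: "a < k \<Longrightarrow> \<exists>R. R \<subseteq> L \<times> L \<and> sync_recognises (Ma ! a) R"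
  using desc by (simp add: describes_def pre_automatic_def)
lemma Meq_R: "\<exists>R. R \<subseteq> L \<times> L \<and> sync_recognises Meq R"
  using desc by (simp add: describes_def pre_automatic_def)
lemma len_iota: "length io = k" using desc by (simp add: describes_def assignment_def)
lemma iota_L: "a < k \<Longrightarrow> io ! a \<in> L" using desc len_iota
  by (auto simp: describes_def assignment_def L_of_def)
lemma g_S: "a < k \<Longrightarrow> g a \<in> S" using desc by (auto simp: describes_def is_interpretation_def alph_def)
lemma nil_L: "[] \<notin> L" using desc by (simp add: describes_def is_interpretation_def L_of_def)
lemma sigma_L: "\<sigma> ` L = S" using desc by (simp add: describes_def is_interpretation_def L_of_def)
lemma Leq: "u \<in> L \<Longrightarrow> v \<in> L \<Longrightarrow> accepts Meq (conv u v) \<longleftrightarrow> \<sigma> u = \<sigma> v"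
  using desc by (simp add: describes_def is_interpretation_def L_of_def Leq_of_def sync_rel_def)
lemma La: "a < k \<Longrightarrow> u \<in> L \<Longrightarrow> v \<in> L \<Longrightarrow> accepts (Ma ! a) (conv u v) \<longleftrightarrow> \<sigma> (u @ [a]) = \<sigma> v"
  using desc by (simp add: describes_def is_interpretation_def L_of_def La_of_def sync_rel_def alph_def)
lemma cons: "a < k \<Longrightarrow> g a = \<sigma> (io ! a)"
  using desc by (simp add: describes_def consistent_def alph_def)

lemma Ma_L: "a < k \<Longrightarrow> accepts (Ma ! a) (conv u v) \<Longrightarrow> u \<in> L \<and> v \<in> L"
proof -
  assume a: "a < k" and acc: "accepts (Ma ! a) (conv u v)"
  obtain R where R: "R \<subseteq> L \<times> L" "sync_recognises (Ma ! a) R" using Ma_R[OF a] by blast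
  show ?thesis using sync_in_L[OF R(2) R(1) acc] R(1) by auto
qed

lemma sigma_S: "w \<noteq> [] \<Longrightarrow> set w \<subseteq> {..<k} \<Longrightarrow> \<sigma> w \<in> S"
proof (induction w rule: rev_induct)
  case Nil then show ?case by simp
next
  case (snoc b w)
  then show ?case by (cases "w = []") (auto simp: wv_snoc g_S closed)
qed

lemma sigma_app: "u \<noteq> [] \<Longrightarrow> v \<noteq> [] \<Longrightarrow> set u \<subseteq> {..<k} \<Longrightarrow> set v \<subseteq> {..<k} \<Longrightarrow> \<sigma> (u @ v) = f (\<sigma> u) (\<sigma> v)"
proof (induction v rule: rev_induct)
  case Nil then show ?case by simp
next
  case (snoc b v)
  show ?case
  proof (cases "v = []")
    case True then show ?thesis using snoc by (simp add: wv_snoc)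
  next
    case False
    have "\<sigma> (u @ v @ [b]) = f (\<sigma> (u @ v)) (g b)" using snoc.prems by (simp add: wv_snoc[of "u @ v", simplified])
    also have "\<dots> = f (f (\<sigma> u) (\<sigma> v)) (g b)" using snoc False by simp
    also have "\<dots> = f (\<sigma> u) (f (\<sigma> v) (g b))" using snoc.prems False
      by (intro assoc sigma_S g_S) auto
    also have "\<dots> = f (\<sigma> u) (\<sigma> (v @ [b]))" using False by (simp add: wv_snoc)
    finally show ?thesis by simp
  qed
qed

lemma L_S: "w \<in> L \<Longrightarrow> \<sigma> w \<in> S" using sigma_L by auto
lemma L_ne: "w \<in> L \<Longrightarrow> w \<noteq> []" using nil_L by auto
lemma L_set: "w \<in> L \<Longrightarrow> set w \<subseteq> {..<k}" using L_lists by auto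

lemma left_id:
  assumes e: "e \<in> S" "\<forall>a<k. f e (g a) = g a" and y: "y \<in> S"
  shows "f e y = y"
proof -
  obtain u where u: "u \<in> L" "y = \<sigma> u" using y sigma_L by auto
  have "u \<noteq> [] \<Longrightarrow> set u \<subseteq> {..<k} \<Longrightarrow> f e (\<sigma> u) = \<sigma> u"
  proof (induction u rule: rev_induct)
    case Nil then show ?case by simp
  next
    case (snoc b v)
    show ?case
    proof (cases "v = []")
      case True then show ?thesis using snoc e by simp
    next
      case False
      then show ?thesis using snoc e
        by (simp add: wv_snoc assoc[symmetric] sigma_S g_S)
    qed
  qed
  then show ?thesis using u L_ne L_set by auto
qed

lemma right_id:
  assumes e: "e \<in> S" "\<forall>a<k. f (g a) e = g a" and y: "y \<in> S"
  shows "f y e = y"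
proof -
  obtain u where u: "u \<in> L" "y = \<sigma> u" using y sigma_L by auto
  have "u \<noteq> [] \<Longrightarrow> set u \<subseteq> {..<k} \<Longrightarrow> f (\<sigma> u) e = \<sigma> u"
  proof (induction u rule: rev_induct)
    case Nil then show ?case by simp
  next
    case (snoc b v)
    show ?case
    proof (cases "v = []")
      case True then show ?thesis using snoc e by simp
    next
      case False
      then show ?thesis using snoc e
        by (simp add: wv_snoc assoc sigma_S g_S)
    qed
  qed
  then show ?thesis using u L_ne L_set by auto
qed

lemma monoid_iff: "monoid \<lparr>carrier = S, mult = f, one = e\<rparr> \<longleftrightarrow> e \<in> S \<and> (\<forall>y\<in>S. f e y = y \<and> f y e = y)"
  unfolding monoid_def using closed assoc by auto

lemma dK: "K x = k" by (simp add: cdefs enc_input_def)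
lemma dL: "cL x = enc_nfa id ML0" by (simp add: cdefs enc_input_def)
lemma dEq: "cEq x = enc_nfa enc_pletter Meq" by (simp add: cdefs enc_input_def)
lemma dMa: "cMa x = list_encode (map (enc_nfa enc_pletter) Ma)" by (simp add: cdefs enc_input_def)
lemma dI: "cI x = list_encode (map list_encode io)" by (simp add: cdefs enc_input_def)

lemma dMa_nth: "a < k \<Longrightarrow> lnth (cMa x) a = enc_nfa enc_pletter (Ma ! a)"
  by (simp add: dMa lnth_enc len_Ma)
lemma dI_nth: "a < k \<Longrightarrow> lnth (cI x) a = list_encode (io ! a)"
  by (simp add: dI lnth_enc len_iota)

definition semE :: "nat list \<Rightarrow> bool" where
  "semE w \<longleftrightarrow> w \<in> L \<and> (\<forall>a<k. f (\<sigma> w) (g a) = g a)"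

lemma inE_aut: "inE x (list_encode w) \<longleftrightarrow> accepts ML0 w \<and> (\<forall>a<k. accepts (Ma ! a) (conv w (io ! a)))"
  unfolding inE_def dK dL by (simp add: accW_correct dMa_nth dI_nth accC_correct)

lemma inE_sem: "inE x (list_encode w) \<longleftrightarrow> semE w"
proof -
  have "accepts (Ma ! a) (conv w (io ! a)) \<longleftrightarrow> f (\<sigma> w) (g a) = g a" if "w \<in> L" "a < k" for a
  proof -
    have 1: "accepts (Ma ! a) (conv w (io ! a)) \<longleftrightarrow> \<sigma> (w @ [a]) = \<sigma> (io ! a)"
      by (rule La[OF that(2) that(1) iota_L[OF that(2)]])
    have 2: "\<sigma> (w @ [a]) = f (\<sigma> w) (g a)" by (rule wv_snoc[OF L_ne[OF that(1)]])
    have 3: "\<sigma> (io ! a) = g a" using cons[OF that(2)] by simp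
    show ?thesis unfolding 1 2 3 ..
  qed
  then show ?thesis unfolding inE_aut semE_def by (auto simp: lang_def)
qed

lemma x_ge_L: "enc_nfa id ML0 \<le> x"
  using pfst_le[of "psnd x"] psnd_le[of x] dL by (simp add: cL_def)

lemma x_ge_Ma: "a < k \<Longrightarrow> enc_nfa enc_pletter (Ma ! a) \<le> x"
proof -
  assume a: "a < k"
  have "enc_nfa enc_pletter (Ma ! a) \<le> cMa x" unfolding dMa
    by (rule mem_le_enc) (use a len_Ma in auto)
  also have "cMa x \<le> x" unfolding cMa_def
    by (meson le_trans pfst_le psnd_le)
  finally show ?thesis .
qed

lemma len_iota_le: "a < k \<Longrightarrow> length (io ! a) \<le> cI x"
proof -
  assume a: "a < k"
  have "length (io ! a) \<le> list_encode (io ! a)" by (rule length_le_enc)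
  also have "\<dots> \<le> cI x" unfolding dI by (rule mem_le_enc) (use a len_iota in auto)
  finally show ?thesis .
qed

lemma hasE_iff: "hasE x \<longleftrightarrow> (\<exists>w. semE w)"
proof
  assume "hasE x"
  then obtain c where "inE x c" unfolding hasE_def by blast
  then have "inE x (list_encode (list_decode c))" by simp
  then show "\<exists>w. semE w" using inE_sem by blast
next
  assume "\<exists>w. semE w"
  then obtain w where "semE w" by blast
  then have "accepts ML0 w \<and> (\<forall>a<k. accepts (Ma ! a) (conv w (io ! a)))"
    using inE_sem inE_aut by blast
  then obtain w' where w': "accepts ML0 w'" "\<forall>a<k. accepts (Ma ! a) (conv w' (io ! a))"
    "length w' \<le> cI x + 2 ^ ((k+1)*(x+1))"
    using pumping[of x ML0 k Ma io "cI x" w] sbound_mono[OF sbound_enc x_ge_L]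
      sbound_mono[OF sbound_enc x_ge_Ma] len_iota_le by blast
  have inw: "inE x (list_encode w')" using w' inE_aut by blast
  have "w' \<in> L" using w'(1) by (simp add: lang_def)
  then have "\<forall>y\<in>set w'. y \<le> k" using L_set by fastforce
  then have "list_encode w' \<le> lbnd k (length w')" by (rule lbnd_bound)
  also have "\<dots> \<le> lbnd k (Bnd x)" using w'(3) by (intro lbnd_mono) (simp add: Bnd_def dK)
  finally have "list_encode w' < Suc (WB x)" by (simp add: WB_def dK)
  then show "hasE x" unfolding hasE_def using inw by blast
qed

lemma wsel_prop: "hasE x \<Longrightarrow> semE (list_decode (wsel x))"
proof -
  assume h: "hasE x"
  then have "wsel x = (LEAST c. inE x c)" unfolding wsel_def hasE_def by (simp add: bmin_eq)
  moreover have "inE x (LEAST c. inE x c)" using h unfolding hasE_def by (meson LeastI)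
  ultimately have "inE x (list_encode (list_decode (wsel x)))" by simp
  then show ?thesis using inE_sem by blast
qed

lemma chain_sem:
  assumes w: "w \<in> L" and a: "a < k" and vc: "validChain x (list_encode w) a ch"
  shows "list_decode (lnth ch (length w)) \<in> L \<and> \<sigma> (list_decode (lnth ch (length w))) = f (g a) (\<sigma> w)"
proof -
  define u where "u j = list_decode (lnth ch j)" for j
  have wk: "j < length w \<Longrightarrow> w ! j < k" for j using L_set[OF w] by (auto simp: subset_iff)
  have u0: "lnth ch 0 = list_encode (io ! a)"
    using vc a by (simp add: validChain_def dI_nth)
  have st: "accC (enc_nfa enc_pletter (Ma ! (w ! j))) (lnth ch j) (lnth ch (Suc j))" if j: "j < length w" for j
  proof -
    have "accC (lnth (cMa x) (lnth (list_encode w) j)) (lnth ch j) (lnth ch (Suc j))"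
      using vc j by (simp add: validChain_def llen_enc)
    then show ?thesis using j wk[OF j] by (simp add: lnth_enc dMa_nth)
  qed
  have main: "j \<le> length w \<Longrightarrow> u j \<in> L \<and> \<sigma> (u j) = (if j = 0 then g a else f (g a) (\<sigma> (take j w)))" for j
  proof (induction j)
    case 0 then show ?case using u0 iota_L[OF a] cons[OF a] by (simp add: u_def)
  next
    case (Suc j)
    then have j: "j < length w" by simp
    have IH: "u j \<in> L" "\<sigma> (u j) = (if j = 0 then g a else f (g a) (\<sigma> (take j w)))" using Suc j by auto
    have acc: "accepts (Ma ! (w ! j)) (conv (u j) (u (Suc j)))"
      using st[OF j] by (simp add: u_def accC_correct[symmetric])
    have uS: "u (Suc j) \<in> L" using Ma_L[OF wk[OF j] acc] by simp
    have "\<sigma> (u (Suc j)) = \<sigma> (u j @ [w ! j])" using La[OF wk[OF j] IH(1) uS] acc by simp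
    also have "\<dots> = f (\<sigma> (u j)) (g (w ! j))" using L_ne[OF IH(1)] by (simp add: wv_snoc)
    also have "\<dots> = f (g a) (\<sigma> (take (Suc j) w))"
    proof (cases "j = 0")
      case True then show ?thesis using IH j by (simp add: take_Suc_conv_app_nth)
    next
      case False
      have tne: "take j w \<noteq> []" using False j by (cases w) auto
      have ts: "set (take j w) \<subseteq> {..<k}" using L_set[OF w] by (meson order_trans set_take_subset)
      have "f (\<sigma> (u j)) (g (w ! j)) = f (f (g a) (\<sigma> (take j w))) (g (w ! j))" using IH False by simp
      also have "\<dots> = f (g a) (f (\<sigma> (take j w)) (g (w ! j)))"
        using tne ts by (intro assoc g_S a sigma_S wk j)
      also have "\<dots> = f (g a) (\<sigma> (take (Suc j) w))"
        using tne j by (simp add: take_Suc_conv_app_nth wv_snoc)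
      finally show ?thesis .
    qed
    finally show ?case using uS by simp
  qed
  show ?thesis using main[of "length w"] L_ne[OF w] by (simp add: u_def)
qed

lemma cert_exists:
  assumes w: "w \<in> L"
  shows "\<exists>c. validCert x (list_encode w) c"
proof -
  define nxt where "nxt j u = (SOME v. v \<in> L \<and> \<sigma> v = f (\<sigma> u) (g (w ! j)))" for j u
  define uu where "uu a j = rec_nat (io ! a) (\<lambda>j u. nxt j u) j" for a j
  have wk: "j < length w \<Longrightarrow> w ! j < k" for j using L_set[OF w] by (auto simp: subset_iff)
  have nx: "u \<in> L \<Longrightarrow> j < length w \<Longrightarrow> nxt j u \<in> L \<and> \<sigma> (nxt j u) = f (\<sigma> u) (g (w ! j))" for u j
  proof -
    assume u: "u \<in> L" and j: "j < length w"
    have "f (\<sigma> u) (g (w ! j)) \<in> S" using L_S[OF u] g_S[OF wk[OF j]] by (rule closed)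
    then have "\<exists>v. v \<in> L \<and> \<sigma> v = f (\<sigma> u) (g (w ! j))" using sigma_L by force
    then show ?thesis unfolding nxt_def by (rule someI_ex)
  qed
  have uuL: "a < k \<Longrightarrow> j \<le> length w \<Longrightarrow> uu a j \<in> L" for a j
    by (induction j) (auto simp: uu_def iota_L nx)
  have step: "a < k \<Longrightarrow> j < length w \<Longrightarrow> accepts (Ma ! (w ! j)) (conv (uu a j) (uu a (Suc j)))" for a j
  proof -
    assume a: "a < k" and j: "j < length w"
    have l: "uu a j \<in> L" using uuL a j by simp
    have "uu a (Suc j) = nxt j (uu a j)" by (simp add: uu_def)
    then show ?thesis using La[OF wk[OF j] l] nx[OF l j] L_ne[OF l] by (simp add: wv_snoc)
  qed
  define ch where "ch a = list_encode (map (\<lambda>j. list_encode (uu a j)) [0..<Suc (length w)])" for a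
  define c where "c = list_encode (map ch [0..<k])"
  have vch: "validChain x (list_encode w) a (lnth c a)" if a: "a < k" for a
  proof -
    have lc: "lnth c a = ch a" using a by (simp add: c_def lnth_enc)
    have 1: "llen (lnth c a) = Suc (llen (list_encode w))" by (simp add: lc ch_def llen_enc)
    have 2: "lnth (lnth c a) 0 = lnth (cI x) a"
      by (simp add: lc ch_def lnth_enc dI_nth a uu_def del: upt_Suc)
    have 3: "accC (lnth (cMa x) (lnth (list_encode w) j)) (lnth (lnth c a) j) (lnth (lnth c a) (Suc j))"
      if j: "j < llen (list_encode w)" for j
    proof -
      have j': "j < length w" using j by (simp add: llen_enc)
      show ?thesis
        using step[OF a j'] j' wk[OF j']
        by (simp add: lc ch_def lnth_enc dMa_nth accC_correct del: upt_Suc)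
    qed
    show ?thesis unfolding validChain_def using 1 2 3 by blast
  qed
  have "llen c = K x" by (simp add: c_def llen_enc dK)
  then have "validCert x (list_encode w) c" unfolding validCert_def using vch dK by simp
  then show ?thesis by blast
qed

end


context msetting
begin

lemma Q_ex: "\<exists>c. Qc c x"
proof (cases "hasE x")
  case False then show ?thesis by (auto simp: Qc_def)
next
  case True
  define w1 where "w1 = list_decode (wsel x)"
  have "semE w1" using wsel_prop[OF True] by (simp add: w1_def)
  then have "w1 \<in> L" by (simp add: semE_def)
  then obtain c where "validCert x (list_encode w1) c" using cert_exists by blast
  then have "Qc c x" by (simp add: Qc_def w1_def)
  then show ?thesis by blast
qed

lemma out_props:
  "(Hc (LEAST c. Qc c x) x = 0 \<longleftrightarrow> \<not> (\<exists>e. monoid \<lparr>carrier = S, mult = f, one = e\<rparr>))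
   \<and> (\<forall>w. Hc (LEAST c. Qc c x) x = Suc (list_encode w) \<longrightarrow>
        w \<in> L_of \<Gamma> \<and> (\<forall>y \<in> S. f (\<sigma> w) y = y \<and> f y (\<sigma> w) = y))"
proof -
  define c0 where "c0 = (LEAST c. Qc c x)"
  have q0: "Qc c0 x" unfolding c0_def using Q_ex by (rule LeastI_ex)
  show ?thesis
  proof (cases "hasE x")
    case False
    have out: "Hc c0 x = 0" using False by (simp add: Hc_def)
    have nm: "\<not> (\<exists>e. monoid \<lparr>carrier = S, mult = f, one = e\<rparr>)"
    proof
      assume "\<exists>e. monoid \<lparr>carrier = S, mult = f, one = e\<rparr>"
      then obtain e where e: "e \<in> S" "\<forall>y\<in>S. f e y = y \<and> f y e = y" using monoid_iff by blast
      then obtain w0 where w0: "w0 \<in> L" "\<sigma> w0 = e" using sigma_L by (metis imageE)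
      have "semE w0" using w0 e g_S by (simp add: semE_def)
      then show False using hasE_iff False by blast
    qed
    show ?thesis using out nm by (simp add: c0_def[symmetric])
  next
    case True
    define w1 where "w1 = list_decode (wsel x)"
    have ws: "wsel x = list_encode w1" by (simp add: w1_def)
    have sE: "semE w1" using wsel_prop[OF True] by (simp add: w1_def)
    then have w1L: "w1 \<in> L" and left: "\<forall>a<k. f (\<sigma> w1) (g a) = g a" by (auto simp: semE_def)
    have e1S: "\<sigma> w1 \<in> S" using L_S[OF w1L] .
    have vc: "validCert x (list_encode w1) c0" using q0 True by (simp add: Qc_def ws)
    have ok_iff: "okC x (wsel x) c0 \<longleftrightarrow> (\<forall>a<k. f (g a) (\<sigma> w1) = g a)"
    proof -
      have "accC (cEq x) (lnth (lnth c0 a) (llen (wsel x))) (lnth (cI x) a) \<longleftrightarrow> f (g a) (\<sigma> w1) = g a"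
        if a: "a < k" for a
      proof -
        have ch: "validChain x (list_encode w1) a (lnth c0 a)" using vc a by (simp add: validCert_def dK)
        define u where "u = list_decode (lnth (lnth c0 a) (length w1))"
        have u: "u \<in> L" "\<sigma> u = f (g a) (\<sigma> w1)" using chain_sem[OF w1L a ch] by (simp_all add: u_def)
        have "accC (cEq x) (lnth (lnth c0 a) (llen (wsel x))) (lnth (cI x) a)
            = accC (enc_nfa enc_pletter Meq) (list_encode u) (list_encode (io ! a))"
          by (simp add: dEq dI_nth a ws llen_enc u_def)
        also have "\<dots> = accepts Meq (conv u (io ! a))" by (rule accC_correct)
        also have "\<dots> = (\<sigma> u = \<sigma> (io ! a))" by (rule Leq[OF u(1) iota_L[OF a]])
        also have "\<dots> = (f (g a) (\<sigma> w1) = g a)" using u(2) cons[OF a] by simp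
        finally show ?thesis .
      qed
      then show ?thesis unfolding okC_def dK by blast
    qed
    show ?thesis
    proof (cases "\<forall>a<k. f (g a) (\<sigma> w1) = g a")
      case R: True
      have idt: "\<forall>y\<in>S. f (\<sigma> w1) y = y \<and> f y (\<sigma> w1) = y"
        using left_id[OF e1S left] right_id[OF e1S R] by blast
      have m: "monoid \<lparr>carrier = S, mult = f, one = \<sigma> w1\<rparr>" using monoid_iff e1S idt by blast
      have out: "Hc c0 x = Suc (list_encode w1)" using True R ok_iff by (simp add: Hc_def ws)
      have "w \<in> L_of \<Gamma> \<and> (\<forall>y \<in> S. f (\<sigma> w) y = y \<and> f y (\<sigma> w) = y)"
        if "Hc c0 x = Suc (list_encode w)" for w
      proof -
        have "w = w1" using that out by (simp add: list_encode_eq)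
        then show ?thesis using w1L idt by (simp add: L_of_def)
      qed
      then show ?thesis using out m by (auto simp: c0_def[symmetric])
    next
      case R: False
      have out: "Hc c0 x = 0" using R ok_iff by (simp add: Hc_def)
      have nm: "\<not> (\<exists>e. monoid \<lparr>carrier = S, mult = f, one = e\<rparr>)"
      proof
        assume "\<exists>e. monoid \<lparr>carrier = S, mult = f, one = e\<rparr>"
        then obtain e where e: "e \<in> S" "\<forall>y\<in>S. f e y = y \<and> f y e = y" using monoid_iff by blast
        have "f (\<sigma> w1) e = e" using left_id[OF e1S left e(1)] .
        moreover have "f (\<sigma> w1) e = \<sigma> w1" using e e1S by blast
        ultimately have "\<sigma> w1 = e" by simp
        then have "\<forall>a<k. f (g a) (\<sigma> w1) = g a" using e g_S by simp
        then show False using R by blast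
      qed
      show ?thesis using out nm by (simp add: c0_def[symmetric])
    qed
  qed
qed

end

theorem proposition4p3:
  "\<exists>P :: recf. \<forall>\<Gamma> \<iota> (S :: 'a set) f g.
     semigroup_on S f \<longrightarrow> describes \<Gamma> \<iota> S f g \<longrightarrow>
     (\<exists>out. eval P [enc_input \<Gamma> \<iota>] out
        \<and> (out = 0 \<longleftrightarrow> \<not> (\<exists>e. monoid \<lparr>carrier = S, mult = f, one = e\<rparr>))
        \<and> (\<forall>w. out = Suc (list_encode w) \<longrightarrow>
              w \<in> L_of \<Gamma> \<and> (\<forall>x \<in> S. f (word_val f g w) x = x \<and> f x (word_val f g w) = x)))"
proof -
  obtain P where P: "\<forall>x. (\<exists>c. Qc c x) \<longrightarrow> eval P [x] (Hc (LEAST c. Qc c x) x)"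
    using alg_exists by blast
  show ?thesis
  proof (intro exI[of _ P] allI impI)
    fix \<Gamma> \<iota> and S :: "'a set" and f g
    assume sg: "semigroup_on S f" and desc: "describes \<Gamma> \<iota> S f g"
    obtain k M1 Meq Ma where G: "\<Gamma> = (k, M1, Meq, Ma)" by (cases \<Gamma>) auto
    interpret msetting k M1 Meq Ma \<iota> S f g
      using sg desc G by unfold_locales auto
    show "\<exists>out. eval P [enc_input \<Gamma> \<iota>] out
        \<and> (out = 0 \<longleftrightarrow> \<not> (\<exists>e. monoid \<lparr>carrier = S, mult = f, one = e\<rparr>))
        \<and> (\<forall>w. out = Suc (list_encode w) \<longrightarrow>
              w \<in> L_of \<Gamma> \<and> (\<forall>x \<in> S. f (word_val f g w) x = x \<and> f x (word_val f g w) = x))"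
      using P Q_ex out_props G by (intro exI[of _ "Hc (LEAST c. Qc c (enc_input \<Gamma> \<iota>)) (enc_input \<Gamma> \<iota>)"]) auto
  qed
qed


end
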